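(* Fix $\lambda\in(-\infty,2]$, $p>0$ and $a\in(0,1)$. There exist $b_0>0$ and $C>0$ such that for every $b\ge b_0$ there exists $c_0>0$ such that for all $c\in(-c_0b^{-(1-a)},c_0b^{-(1-a)})$ the solution $\Psi_c$ (continued as a solution of $\Psi''-\frac{1}{p^2}\Psi+|\Psi|^{2p}\Psi=-\lambda e^{2t}\Psi+e^{4t}\Psi$) satisfies, for all $t\in[-(1-a)p\log b,0]$, $$|\Psi_c(t)-c\Upsilon_h(t)|\le C|c|^{2p+1}b^{2p(1-a)}e^{-t/p},$$ with the same bound holding for $\Psi_c'(t)-c\Upsilon_h'(t)$.
   Context: Let $\alpha=\frac{p+1}{2p}-\frac{\lambda}{4}$, $\beta=1+\frac1p$, and let $\mathfrak{U}(z;\alpha,\beta)$ be the Tricomi confluent hypergeometric function (the solution of $zu''+(\beta-z)u'-\alpha u=0$ with $\mathfrak{U}(z;\alpha,\beta)\sim z^{-\alpha}(1+O(z^{-1}))$ as $z\to+\infty$). Define $\Upsilon_h(t)=e^{t/p}e^{-\frac12e^{2t}}\mathfrak{U}(e^{2t};\alpha,\beta)$ and let $\Upsilon_g$ be the solution of $\Upsilon''-\frac1{p^2}\Upsilon+\lambda e^{2t}\Upsilon-e^{4t}\Upsilon=0$ with $\Upsilon_h\Upsilon_g'-\Upsilon_h'\Upsilon_g=1$ and $\Upsilon_g(t)\sim\frac12e^{-(1+\frac{\lambda}{2})t}e^{\frac12e^{2t}}$ as $t\to+\infty$. For small $|c|$, $\Psi_c$ denotes the solution of $\Psi''-\frac{1}{p^2}\Psi+|\Psi|^{2p}\Psi=-\lambda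 e^{2t}\Psi+e^{4t}\Psi$ such that $\eta=\Psi_c-c\Upsilon_h$ satisfies, for $t\ge0$, $\eta(t)=\int_t^\infty(\Upsilon_h(t')\Upsilon_g(t)-\Upsilon_h(t)\Upsilon_g(t'))|c\Upsilon_h(t')+\eta(t')|^{2p}(c\Upsilon_h(t')+\eta(t'))dt'$ and $|\eta(t)|\le C|c|^{2p+1}e^{-(1-\frac{\lambda}{2})t}e^{-\frac12 e^{2t}}$ on $[0,\infty)$; this solution decays as $\Psi_c(t)\sim ce^{-\frac{(2-\lambda)t}{2}}e^{-\frac12e^{2t}}$ as $t\to+\infty$. *)

theory Defs
  imports "HOL-Analysis.Analysis" "HOL-Library.Landau_Symbols"
begin

definition kummer_alpha :: "real \<Rightarrow> real \<Rightarrow> real" where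
  "kummer_alpha p lam = (p + 1) / (2 * p) - lam / 4"

definition kummer_beta :: "real \<Rightarrow> real" where
  "kummer_beta p = 1 + 1 / p"

definition is_tricomi_U :: "real \<Rightarrow> real \<Rightarrow> (real \<Rightarrow> real) \<Rightarrow> bool" where
  "is_tricomi_U al be U \<longleftrightarrow>
     (\<exists>dU d2U. \<forall>z>0. (U has_real_derivative dU z) (at z)
                  \<and> (dU has_real_derivative d2U z) (at z)
                  \<and> z * d2U z + (be - z) * dU z - al * U z = 0)
   \<and> (\<lambda>z. U z * z powr al - 1) \<in> O[at_top](\<lambda>z. 1 / z)"

definition Upsilon_h :: "(real \<Rightarrow> real) \<Rightarrow> real \<Rightarrow> real \<Rightarrow> real" where
  "Upsilon_h U p t = exp (t / p) * exp (- exp (2 * t) / 2) * U (exp (2 * t))"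

definition is_Upsilon_g :: "real \<Rightarrow> real \<Rightarrow> (real \<Rightarrow> real) \<Rightarrow> (real \<Rightarrow> real) \<Rightarrow> bool" where
  "is_Upsilon_g p lam Yh Yg \<longleftrightarrow>
     (\<exists>dYg. \<forall>t. (Yg has_real_derivative dYg t) (at t)
              \<and> (dYg has_real_derivative
                    ((1 / p^2 - lam * exp (2 * t) + exp (4 * t)) * Yg t)) (at t)
              \<and> Yh t * dYg t - deriv Yh t * Yg t = 1)
   \<and> ((\<lambda>t. Yg t / ((1/2) * exp (- (1 + lam / 2) * t) * exp (exp (2 * t) / 2)))
        \<longlongrightarrow> 1) at_top"

definition is_Psi_c :: "real \<Rightarrow> real \<Rightarrow> (real \<Rightarrow> real) \<Rightarrow> (real \<Rightarrow> real) \<Rightarrow> real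
                        \<Rightarrow> (real \<Rightarrow> real) \<Rightarrow> bool" where
  "is_Psi_c p lam Yh Yg c Psi \<longleftrightarrow>
     (\<exists>dPsi. \<forall>t. (Psi has_real_derivative dPsi t) (at t)
              \<and> (dPsi has_real_derivative
                    (Psi t / p^2 - \<bar>Psi t\<bar> powr (2 * p) * Psi t
                     - lam * exp (2 * t) * Psi t + exp (4 * t) * Psi t)) (at t))
   \<and> (\<forall>t\<ge>0. ((\<lambda>s. (Yh s * Yg t - Yh t * Yg s)
                    * (\<bar>Psi s\<bar> powr (2 * p) * Psi s)) has_integral (Psi t - c * Yh t)) {t..})
   \<and> (\<exists>C. \<forall>t\<ge>0. \<bar>Psi t - c * Yh t\<bar>
                 \<le> C * \<bar>c\<bar> powr (2 * p + 1) * exp (- (1 - lam / 2) * t) * exp (- exp (2 * t) / 2))"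

end

theory Submission
  imports Defs
begin



lemma alg:
  fixes z d2 d1 u E p lam al be w :: real
  assumes "z * d2 = -(be - z)*d1 + al*u" "be = 1+1/p" "al = (p+1)/(2*p) - lam/4" "p>0" "w = z*z"
  shows "(1/p - z)*E*((1/p - z)*u + 2*z*d1) + (-(z*2)*u + d1*(z*2)*(1/p - z) + (2*(z*2)*d1 + d2*(z*2)*(2*z)))*E = (1/p^2 - lam*z + w)*(E*u)"
proof -
  have h0: "d2*(z*2)*(2*z) = 4*z*(z*d2)" by simp
  have h: "d2*(z*2)*(2*z) = 4*z*(-(1 + 1/p - z)*d1 + ((p+1)/(2*p) - lam/4)*u)"
    unfolding h0 assms(1) assms(2,3) ..
  show ?thesis unfolding h assms(5) using assms(4) by (simp add: field_simps power2_eq_square) 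
qed

lemma Yh_derivs:
  fixes p lam :: real and U dU d2U :: "real \<Rightarrow> real"
  assumes p: "p > 0"
    and UD: "\<And>z. z > 0 \<Longrightarrow> (U has_real_derivative dU z) (at z) \<and> (dU has_real_derivative d2U z) (at z)
                  \<and> z * d2U z + (kummer_beta p - z) * dU z - kummer_alpha p lam * U z = 0"
  shows "(Upsilon_h U p has_real_derivative
           (exp (t/p) * exp (- exp (2*t) / 2) * ((1/p - exp (2*t)) * U (exp (2*t)) + 2 * exp (2*t) * dU (exp (2*t))))) (at t)"
    and "((\<lambda>t. exp (t/p) * exp (- exp (2*t) / 2) * ((1/p - exp (2*t)) * U (exp (2*t)) + 2 * exp (2*t) * dU (exp (2*t))))
          has_real_derivative ((1/p^2 - lam * exp (2*t) + exp (4*t)) * Upsilon_h U p t)) (at t)"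
proof -
  have e: "exp (2*t) > 0" by simp
  have U1: "((\<lambda>t. U (exp (2*t))) has_real_derivative dU (exp (2*t)) * (exp (2*t) * 2)) (at t)"
    using UD[OF e] by (auto intro!: DERIV_chain2[where f=U] derivative_eq_intros)
  have U2: "((\<lambda>t. dU (exp (2*t))) has_real_derivative d2U (exp (2*t)) * (exp (2*t) * 2)) (at t)"
    using UD[OF e] by (auto intro!: DERIV_chain2[where f=dU] derivative_eq_intros)
  have ode: "exp (2*t) * d2U (exp (2*t)) = - (kummer_beta p - exp (2*t)) * dU (exp (2*t)) + kummer_alpha p lam * U (exp (2*t))"
    using UD[OF e] by algebra
  have E: "((\<lambda>t. exp (t/p) * exp (- exp (2*t) / 2)) has_real_derivative (1/p - exp (2*t)) * (exp (t/p) * exp (- exp (2*t) / 2))) (at t)"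
    using p by (auto intro!: derivative_eq_intros simp: field_simps)
  show "(Upsilon_h U p has_real_derivative
           (exp (t/p) * exp (- exp (2*t) / 2) * ((1/p - exp (2*t)) * U (exp (2*t)) + 2 * exp (2*t) * dU (exp (2*t))))) (at t)"
    unfolding Upsilon_h_def
    apply (rule DERIV_cong)
     apply (rule DERIV_mult[OF E U1])
    by (simp add: algebra_simps)
  have "exp (4*t) = exp (2*t) * exp(2*t)" by (simp flip: exp_add)
  have A: "((\<lambda>t. 1/p - exp (2*t)) has_real_derivative - (exp (2*t) * 2)) (at t)"
    by (auto intro!: derivative_eq_intros)
  have B: "((\<lambda>t. 2 * exp (2*t)) has_real_derivative 2 * (exp (2*t) * 2)) (at t)"
    by (auto intro!: derivative_eq_intros)
  note Q = DERIV_add[OF DERIV_mult[OF A U1] DERIV_mult[OF B U2]]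
  show "((\<lambda>t. exp (t/p) * exp (- exp (2*t) / 2) * ((1/p - exp (2*t)) * U (exp (2*t)) + 2 * exp (2*t) * dU (exp (2*t))))
          has_real_derivative ((1/p^2 - lam * exp (2*t) + exp (4*t)) * Upsilon_h U p t)) (at t)"
    unfolding Upsilon_h_def
    apply (rule DERIV_cong)
     apply (rule DERIV_mult[OF E Q])
    by (rule alg[OF ode _ _ p \<open>exp (4*t) = _\<close>]) (simp_all add: kummer_alpha_def kummer_beta_def)
qed


lemma energy_comparison:
  fixes x dx r :: "real \<Rightarrow> real" and p k Q eps t :: real
  assumes p: "p > 0" and k: "k \<ge> 0" and Q: "Q \<ge> 0" and eps: "eps > 0" and t: "t \<le> 0"
    and dx: "\<And>s. (x has_real_derivative dx s) (at s)"
    and ddx: "\<And>s. (dx has_real_derivative (x s / p^2 + r s)) (at s)"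
    and rb: "\<And>s. t < s \<Longrightarrow> s < 0 \<Longrightarrow> abs (r s) \<le> k * exp (2 * s) * abs (x s) + Q * exp (-2 * s) * exp (-s/p)"
  shows "sqrt (p^2 * (dx t)^2 + (x t)^2 + eps)
           \<le> exp (p*k/2) * exp (-t/p) * (sqrt (p^2 * (dx 0)^2 + (x 0)^2 + eps) + p * Q * exp (-2*t) / 2)"
proof -
  define G where "G s = p^2 * (dx s)^2 + (x s)^2 + eps" for s
  define F where "F s = sqrt (G s)" for s
  define m where "m s = exp (p*k*exp(2 * s)/2)" for s
  define m0 where "m0 = exp (p*k/2)"
  define Z where "Z s = F s * exp (s/p) * m s - p*Q*m0*exp(-2 * s)/2" for s
  have Gpos: "G s > 0" for s
  proof -
    have "p^2 * (dx s)^2 + (x s)^2 \<ge> 0" by simp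
    thus ?thesis unfolding G_def using eps by linarith
  qed
  have Fpos: "F s > 0" for s unfolding F_def using Gpos[of s] by simp
  have FF: "F s * F s = G s" for s unfolding F_def using Gpos[of s] by (simp add: less_imp_le)
  have dG: "(G has_real_derivative (2*p^2*dx s*(x s / p^2 + r s) + 2*x s*dx s)) (at s)" for s
  proof -
    have "((\<lambda>s. p^2 * (dx s)^2 + (x s)^2 + eps) has_real_derivative 
       (p^2 * (of_nat 2 * ((x s / p^2 + r s) * dx s ^ (2 - Suc 0))) + of_nat 2 * (dx s * x s ^ (2 - Suc 0)) + 0)) (at s)"
      by (intro DERIV_add DERIV_cmult DERIV_power dx ddx DERIV_const)
    thus ?thesis unfolding G_def[abs_def] by (rule DERIV_cong) (use p in \<open>simp add: field_simps\<close>)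
  qed
  have dF: "(F has_real_derivative (2*p^2*dx s*(x s / p^2 + r s) + 2*x s*dx s) / (2 * F s)) (at s)" for s
    unfolding F_def[abs_def]
    by (rule DERIV_cong, rule DERIV_chain2[OF DERIV_real_sqrt[OF Gpos] dG]) (simp add: F_def field_simps)
  have dm: "(m has_real_derivative m s * (p*k*exp(2 * s))) (at s)" for s
  proof -
    have "((\<lambda>s. p*k*exp(2 * s)/2) has_real_derivative p*k*exp(2 * s)) (at s)"
      by (auto intro!: derivative_eq_intros)
    from DERIV_fun_exp[OF this] show ?thesis unfolding m_def[abs_def] .
  qed
  have dE: "((\<lambda>s. exp (s/p)) has_real_derivative exp (s/p) / p) (at s)" for s
    using p by (auto intro!: derivative_eq_intros)
  have dE2: "((\<lambda>s. p*Q*m0*exp(-2 * s)/2) has_real_derivative - p*Q*m0*exp(-2 * s)) (at s)" for s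
    by (auto intro!: derivative_eq_intros)
  define F' where "F' s = (2*p^2*dx s*(x s / p^2 + r s) + 2*x s*dx s) / (2 * F s)" for s
  define Z' where "Z' s = (F' s + F s / p + p*k*exp(2 * s)*F s) * exp (s/p) * m s + p*Q*m0*exp(-2 * s)" for s
  have dZ: "(Z has_real_derivative Z' s) (at s)" for s
  proof -
    note D = DERIV_diff[OF DERIV_mult[OF DERIV_mult[OF dF[of s, folded F'_def] dE] dm] dE2]
    show ?thesis unfolding Z_def[abs_def] Z'_def
      by (rule DERIV_cong[OF D]) (simp add: algebra_simps)
  qed
  have key: "F' s + F s / p + p*k*exp(2 * s)*F s \<ge> - p*Q*exp(-2 * s)*exp(-s/p)" if s: "t < s" "s < 0" for s
  proof -
    have xF: "abs (x s) \<le> F s" unfolding F_def G_def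
      by (rule real_le_rsqrt) (use eps in \<open>simp add: power2_eq_square\<close>)
    have dxF: "p * abs (dx s) \<le> F s" unfolding F_def G_def
    proof (rule real_le_rsqrt)
      have "(p * abs (dx s))^2 = p^2 * (dx s)^2" by (simp add: power_mult_distrib)
      moreover have "(x s)^2 \<ge> 0" by simp
      ultimately show "(p * abs (dx s))^2 \<le> p^2 * (dx s)^2 + (x s)^2 + eps" using eps by linarith
    qed
    have F'eq: "F' s = (2 * x s * dx s + p^2 * dx s * r s) / F s"
      unfolding F'_def using p Fpos[of s] by (simp add: field_simps)
    have a1: "2 * x s * dx s \<ge> - (F s * F s) / p"
    proof -
      have "0 \<le> (x s + p * dx s)^2" by simp
      hence "- 2 * p * (x s * dx s) \<le> (x s)^2 + p^2 * (dx s)^2" by (simp add: power2_eq_square algebra_simps)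
      hence "- 2 * p * (x s * dx s) \<le> F s * F s" unfolding FF G_def using eps by linarith
      thus ?thesis using p by (simp add: field_simps)
    qed
    have a2: "p^2 * dx s * r s \<ge> - p * abs (r s) * F s"
    proof -
      have "abs (p^2 * dx s * r s) = p * abs (r s) * (p * abs (dx s))" using p by (simp add: abs_mult power2_eq_square)
      also have "\<dots> \<le> p * abs (r s) * F s" using dxF p by (intro mult_left_mono) auto
      finally show ?thesis by linarith
    qed
    have "F' s \<ge> - F s / p - p * abs (r s)"
    proof -
      have "2 * x s * dx s + p^2 * dx s * r s \<ge> (- F s / p - p * abs (r s)) * F s"
        using a1 a2 by (simp add: algebra_simps)
      thus ?thesis unfolding F'eq using Fpos[of s] by (simp add: field_simps)
    qed
    moreover have "p * abs (r s) \<le> p*k*exp(2 * s)*F s + p*Q*exp(-2 * s)*exp(-s/p)"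
    proof -
      have "k*exp(2 * s)*abs (x s) \<le> k*exp(2 * s)*F s"
        by (rule mult_left_mono[OF xF]) (use k in simp)
      hence "abs (r s) \<le> k*exp(2 * s)*F s + Q*exp(-2 * s)*exp(-s/p)"
        using rb[OF s] by linarith
      hence "p * abs (r s) \<le> p * (k*exp(2 * s)*F s + Q*exp(-2 * s)*exp(-s/p))"
        by (rule mult_left_mono) (use p in simp)
      thus ?thesis by (simp add: algebra_simps)
    qed
    ultimately show ?thesis by linarith
  qed
  have Zmono: "Z t \<le> Z 0"
  proof (rule DERIV_nonneg_imp_increasing_open[OF t])
    fix s assume s: "t < s" "s < 0"
    have mle: "m s \<le> m0"
    proof -
      have "exp (2 * s) \<le> 1" using s by simp
      hence "k * exp (2 * s) \<le> k * 1" using k by (rule mult_left_mono)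
      hence "p * k * exp (2 * s) / 2 \<le> p * k / 2" using p by (simp add: mult.assoc)
      thus ?thesis unfolding m_def m0_def by simp
    qed
    have "Z' s \<ge> - p*Q*exp(-2 * s)*exp(-s/p) * exp (s/p) * m s + p*Q*m0*exp(-2 * s)"
      unfolding Z'_def using key[OF s] by (intro add_right_mono mult_right_mono) (auto simp: m_def)
    also have "- p*Q*exp(-2 * s)*exp(-s/p) * exp (s/p) * m s = - p*Q*exp(-2 * s) * m s"
      by (simp add: mult_exp_exp)
    finally have "Z' s \<ge> p*Q*exp(-2 * s) * (m0 - m s)" by (simp add: algebra_simps)
    moreover have "p*Q*exp(-2 * s) * (m0 - m s) \<ge> 0" using mle p Q by simp
    ultimately have "Z' s \<ge> 0" by linarith
    thus "\<exists>y. (Z has_real_derivative y) (at s) \<and> 0 \<le> y" using dZ[of s] by blast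
  next
    show "continuous_on {t..0} Z" using dZ
      by (meson DERIV_isCont continuous_at_imp_continuous_on)
  qed
  have m1: "m t \<ge> 1" unfolding m_def using p k by simp
  have m00: "m 0 = m0" unfolding m_def m0_def by simp
  have "F t * exp (t/p) * m t - p*Q*m0*exp(-2*t)/2 \<le> F 0 * exp (0/p) * m 0 - p*Q*m0*exp(-2*0)/2"
    using Zmono unfolding Z_def .
  hence "F t * exp (t/p) * m t - p*Q*m0*exp(-2*t)/2 \<le> F 0 * m0 - p*Q*m0/2" unfolding m00 by simp
  moreover have "p*Q*m0 \<ge> 0" using p Q unfolding m0_def by simp
  ultimately have A: "F t * exp (t/p) * m t \<le> F 0 * m0 + p*Q*m0*exp(-2*t)/2" by linarith
  have "F t * exp (t/p) * 1 \<le> F t * exp (t/p) * m t"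
    by (rule mult_left_mono[OF m1]) (use Fpos[of t] in simp)
  with A have "F t * exp (t/p) \<le> F 0 * m0 + p*Q*m0*exp(-2*t)/2" by simp
  hence "F t * exp (t/p) * exp (-t/p) \<le> (F 0 * m0 + p*Q*m0*exp(-2*t)/2) * exp (-t/p)"
    by (rule mult_right_mono) simp
  hence "F t \<le> (F 0 * m0 + p*Q*m0*exp(-2*t)/2) * exp (-t/p)"
    by (simp add: mult.assoc flip: exp_add)
  also have "\<dots> = m0 * exp (-t/p) * (F 0 + p*Q*exp(-2*t)/2)" by (simp add: algebra_simps)
  finally show ?thesis unfolding F_def G_def m0_def .
qed


lemma kbound:
  fixes hs ht gs gt psi ws wt es et A M p :: real
  assumes ws: "ws > 0" and wt: "wt > 0" and es: "es > 0" and et: "et > 0" and A: "A \<ge> 0" and M: "M \<ge> 0" and p: "p \<ge> 0"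
    and hs: "abs hs \<le> A * ws" and ht: "abs ht \<le> A * wt"
    and gs: "abs gs \<le> A * es / ws" and gt: "abs gt \<le> A * et / wt"
    and psi: "abs psi \<le> M * ws"
    and w2: "ws^2 \<le> wt^2 * es / et" and wp: "ws powr (2*p) \<le> wt powr (2*p)"
  shows "abs ((hs * gt - ht * gs) * (abs psi powr (2*p) * psi))
           \<le> 2 * A^2 * (M powr (2*p)) * M * wt * (wt powr (2*p)) * es"
proof -
  have N: "abs (abs psi powr (2*p) * psi) \<le> (M powr (2*p) * ws powr (2*p)) * (M * ws)"
  proof -
    have "abs (abs psi powr (2*p) * psi) = abs psi powr (2*p) * abs psi" by (simp add: abs_mult)
    also have "\<dots> \<le> (M * ws) powr (2*p) * (M * ws)"
      by (intro mult_mono powr_mono2 psi) (use ws M p in auto)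
    also have "(M * ws) powr (2*p) = M powr (2*p) * ws powr (2*p)" using ws M by (simp add: powr_mult)
    finally show ?thesis .
  qed
  have K: "abs (hs * gt - ht * gs) \<le> (A * ws) * (A * et / wt) + (A * wt) * (A * es / ws)"
  proof -
    have "abs (hs * gt - ht * gs) \<le> abs hs * abs gt + abs ht * abs gs" by (simp add: abs_mult abs_triangle_ineq4 order_trans[OF abs_triangle_ineq4])
    also have "\<dots> \<le> (A * ws) * (A * et / wt) + (A * wt) * (A * es / ws)"
      by (intro add_mono mult_mono hs gt ht gs) (use A ws wt et es in auto)
    finally show ?thesis .
  qed
  have "abs ((hs * gt - ht * gs) * (abs psi powr (2*p) * psi))
        \<le> ((A * ws) * (A * et / wt) + (A * wt) * (A * es / ws)) * ((M powr (2*p) * ws powr (2*p)) * (M * ws))"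
    unfolding abs_mult[of "hs * gt - ht * gs"] by (intro mult_mono K N) (use A ws wt et es M in auto)
  also have "\<dots> = A^2 * (M powr (2*p)) * M * (ws powr (2*p)) * (ws^2 * et / wt + wt * es)"
    using ws wt by (simp add: field_simps power2_eq_square)
  also have "\<dots> \<le> A^2 * (M powr (2*p)) * M * (wt powr (2*p)) * (wt * es + wt * es)"
  proof (intro mult_mono add_mono wp)
    have "ws^2 * et / wt \<le> (wt^2 * es / et) * et / wt"
      by (intro divide_right_mono mult_right_mono w2) (use et wt in auto)
    also have "\<dots> = wt * es" using et wt by (simp add: field_simps power2_eq_square)
    finally show "ws^2 * et / wt \<le> wt * es" .
  qed (use A M wt es ws et in auto)
  also have "\<dots> = 2 * A^2 * (M powr (2*p)) * M * wt * (wt powr (2*p)) * es" by (simp add: algebra_simps)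
  finally show ?thesis .
qed


definition wfn :: "real \<Rightarrow> real \<Rightarrow> real" where
  "wfn lam t = exp (- (1 - lam/2) * t - exp (2*t) / 2)"

lemma le_by_diff: fixes a b c d :: real shows "a - b = c + d \<Longrightarrow> 0 \<le> c \<Longrightarrow> 0 \<le> d \<Longrightarrow> b \<le> a"
  by linarith

lemma wfn_pos: "wfn lam t > 0" unfolding wfn_def by simp

lemma wfn_alt: "exp (- (1 - lam / 2) * t) * exp (- exp (2 * t) / 2) = wfn lam t"
  unfolding wfn_def by (simp flip: exp_add)

lemma exp2_gap: fixes s t :: real assumes "0 \<le> t" "t \<le> s" shows "exp (2* s) - exp (2*t) \<ge> 2*(s - t)"
proof -
  have "exp (2* s) = exp (2*t) * exp (2*(s-t))" by (simp flip: exp_add add: algebra_simps)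
  also have "\<dots> \<ge> exp (2*t) * (1 + 2*(s-t))"
    by (intro mult_left_mono) (use exp_ge_add_one_self[of "2*(s-t)"] in auto)
  finally have "exp (2* s) \<ge> exp (2*t) + exp (2*t) * (2*(s-t))" by (simp add: algebra_simps)
  moreover have "exp (2*t) * (2*(s-t)) \<ge> 1 * (2*(s-t))"
    by (intro mult_right_mono) (use assms in auto)
  ultimately show ?thesis by linarith
qed

lemma wfn_mono: assumes "lam \<le> 2" "0 \<le> t" "t \<le> s" shows "wfn lam s \<le> wfn lam t"
proof -
  have f1: "0 \<le> (exp (2 * s) - exp (2*t)) / 2" using assms by simp
  have f2: "(1 - lam/2) * (s - t) \<ge> 0" using assms by simp
  have f3: "(- (1 - lam/2) * t - exp (2*t) / 2) - (- (1 - lam/2) * s - exp (2 * s) / 2)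
     = (1 - lam/2) * (s - t) + (exp (2 * s) - exp (2*t)) / 2" by (simp add: field_simps)
  have "- (1 - lam/2) * s - exp (2 * s) / 2 \<le> - (1 - lam/2) * t - exp (2*t) / 2"
    by (rule le_by_diff[OF f3 f2 f1])
  thus ?thesis unfolding wfn_def by simp
qed

lemma wfn_le1: assumes "lam \<le> 2" "0 \<le> t" shows "wfn lam t \<le> 1"
proof -
  have "(1 - lam/2) * t \<ge> 0" using assms by simp
  moreover have "exp (2*t) > 0" by simp
  ultimately have "- (1 - lam/2) * t - exp (2*t) / 2 \<le> 0" by linarith
  thus ?thesis unfolding wfn_def by simp
qed

lemma wfn_sq: assumes "lam \<le> 2" "0 \<le> t" "t \<le> s"
  shows "(wfn lam s)^2 \<le> (wfn lam t)^2 * exp (-2* s) / exp (-2*t)"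
proof -
  have e: "(wfn lam x)^2 = exp (- (2 - lam) * x - exp (2*x))" for x
    unfolding wfn_def power2_eq_square by (simp flip: exp_add add: algebra_simps)
  have "(wfn lam t)^2 * exp (-2* s) / exp (-2*t) = exp (- (2 - lam) * t - exp (2*t) - 2* s + 2*t)"
    unfolding e by (simp add: exp_diff exp_add[symmetric] algebra_simps flip: exp_add exp_diff)
  moreover have "- (2 - lam) * s - exp (2* s) \<le> - (2 - lam) * t - exp (2*t) - 2* s + 2*t"
  proof -
    have g2: "(2 - lam) * (s - t) \<ge> 0" using assms by simp
    have g1: "0 \<le> exp (2 * s) - exp (2*t) - 2*(s-t)" using exp2_gap[OF assms(2,3)] by simp
    have g3: "(- (2 - lam) * t - exp (2*t) - 2* s + 2*t) - (- (2 - lam) * s - exp (2* s))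
       = (exp (2* s) - exp (2*t) - 2*(s-t)) + (2 - lam) * (s - t)" by (simp add: algebra_simps)
    show ?thesis by (rule le_by_diff[OF g3 g1 g2])
  qed
  ultimately show ?thesis unfolding e by simp
qed

lemma int_est:
  fixes Yh Yg Psi :: "real \<Rightarrow> real" and c p A M t lam :: real
  assumes p: "p \<ge> 0" and A: "A \<ge> 0" and M: "M \<ge> 0" and t: "t \<ge> 0" and lam: "lam \<le> 2"
    and int: "((\<lambda>s. (Yh s * Yg t - Yh t * Yg s) * (abs (Psi s) powr (2 * p) * Psi s)) has_integral (Psi t - c * Yh t)) {t..}"
    and Yhb: "\<And>s. s \<ge> 0 \<Longrightarrow> abs (Yh s) \<le> A * wfn lam s"
    and Ygb: "\<And>s. s \<ge> 0 \<Longrightarrow> abs (Yg s) \<le> A * exp (-2* s) / wfn lam s"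
    and Psib: "\<And>s. s \<ge> t \<Longrightarrow> abs (Psi s) \<le> M * wfn lam s"
  shows "abs (Psi t - c * Yh t) \<le> A^2 * (M powr (2*p)) * M * wfn lam t * (wfn lam t powr (2*p)) * exp (-2*t)"
proof -
  define K where "K = 2 * A^2 * (M powr (2*p)) * M * wfn lam t * (wfn lam t powr (2*p))"
  have g: "((\<lambda>s. K * exp (-2* s)) has_integral K * (exp (-2*t) / 2)) {t..}"
    using has_integral_exp_minus_to_infinity[of 2 t] by (intro has_integral_mult_right) simp
  have fi: "(\<lambda>s. (Yh s * Yg t - Yh t * Yg s) * (abs (Psi s) powr (2 * p) * Psi s)) integrable_on {t..}"
    using int by blast
  have "norm (integral {t..} (\<lambda>s. (Yh s * Yg t - Yh t * Yg s) * (abs (Psi s) powr (2 * p) * Psi s)))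
         \<le> integral {t..} (\<lambda>s. K * exp (-2* s))"
  proof (rule integral_norm_bound_integral[OF fi])
    show "(\<lambda>s. K * exp (-2* s)) integrable_on {t..}" using g by blast
    fix s assume "s \<in> {t..}"
    hence s: "t \<le> s" by simp
    show "norm ((Yh s * Yg t - Yh t * Yg s) * (abs (Psi s) powr (2 * p) * Psi s)) \<le> K * exp (-2* s)"
      unfolding K_def real_norm_def
      by (rule kbound[OF wfn_pos wfn_pos exp_gt_zero exp_gt_zero A M p Yhb Yhb Ygb Ygb Psib wfn_sq[OF lam t s]])
         (use s t wfn_mono[OF lam t s] p in \<open>auto intro: powr_mono2 less_imp_le[OF wfn_pos]\<close>)
  qed
  also have "\<dots> = K * (exp (-2*t) / 2)" using g by (rule integral_unique)
  finally show ?thesis using integral_unique[OF int] unfolding K_def by simp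
qed


lemma U_bound:
  assumes "is_tricomi_U al be U"
  obtains B where "B \<ge> 0" "\<And>z. z \<ge> 1 \<Longrightarrow> abs (U z) \<le> B * z powr (-al)"
proof -
  from assms obtain dU d2U where D: "\<And>z. z > 0 \<Longrightarrow> (U has_real_derivative dU z) (at z)"
    and O: "(\<lambda>z. U z * z powr al - 1) \<in> O[at_top](\<lambda>z. 1 / z)"
    unfolding is_tricomi_U_def by blast
  from O obtain c where c: "c > 0" "eventually (\<lambda>z. norm (U z * z powr al - 1) \<le> c * norm (1 / z)) at_top"
    by (rule landau_o.bigE)
  then obtain Z where Z: "\<And>z. z \<ge> Z \<Longrightarrow> norm (U z * z powr al - 1) \<le> c * norm (1 / z)"
    by (auto simp: eventually_at_top_linorder)
  define Z1 where "Z1 = max 1 Z"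
  have "continuous_on {1..Z1} (\<lambda>z. U z * z powr al)"
  proof (intro continuous_on_mult)
    show "continuous_on {1..Z1} U"
      apply (rule continuous_at_imp_continuous_on)
      apply (intro ballI)
      apply (rule DERIV_isCont[OF D])
      by auto
    show "continuous_on {1..Z1} (\<lambda>z. z powr al)"
      by (intro continuous_intros) auto
  qed
  then obtain B1 where B1: "B1 \<ge> 0" "\<And>z. z \<in> {1..Z1} \<Longrightarrow> norm (U z * z powr al) \<le> B1"
    using continuous_on_compact_bound[OF compact_Icc] by blast
  define B where "B = max B1 (1 + c)"
  have bnd: "abs (U z * z powr al) \<le> B" if z: "z \<ge> 1" for z
  proof (cases "z \<le> Z1")
    case True thus ?thesis using B1(2)[of z] z unfolding B_def by auto
  next
    case False
    hence "z \<ge> Z" "z \<ge> 1" unfolding Z1_def using z by auto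
    hence "abs (U z * z powr al - 1) \<le> c * abs (1 / z)" using Z[of z] unfolding real_norm_def by blast
    moreover have "c * abs (1 / z) \<le> c" using c(1) \<open>z \<ge> 1\<close> by (simp add: field_simps)
    ultimately show ?thesis unfolding B_def by linarith
  qed
  show ?thesis
  proof (rule that)
    show "B \<ge> 0" unfolding B_def using B1 by simp
    fix z :: real assume z: "z \<ge> 1"
    have "abs (U z) = abs (U z * z powr al) * z powr (-al)"
      using z by (simp add: abs_mult mult.assoc flip: powr_add)
    also have "\<dots> \<le> B * z powr (-al)" using bnd[OF z] by (intro mult_right_mono) auto
    finally show "abs (U z) \<le> B * z powr (-al)" .
  qed
qed

lemma Yh_bound_pos:
  assumes "is_tricomi_U (kummer_alpha p lam) be U" "p > 0"
  obtains A where "A \<ge> 0" "\<And>t. t \<ge> 0 \<Longrightarrow> abs (Upsilon_h U p t) \<le> A * wfn lam t"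
proof -
  obtain B where B: "B \<ge> 0" "\<And>z. z \<ge> 1 \<Longrightarrow> abs (U z) \<le> B * z powr (- kummer_alpha p lam)"
    using U_bound[OF assms(1)] by blast
  show ?thesis
  proof (rule that[OF B(1)])
    fix t :: real assume t: "t \<ge> 0"
    have "exp (2*t) powr (- kummer_alpha p lam) = exp (- 2 * t * kummer_alpha p lam)"
      by (simp add: powr_def)
    hence U: "abs (U (exp (2*t))) \<le> B * exp (- 2 * t * kummer_alpha p lam)"
      using B(2)[of "exp (2*t)"] t by simp
    have "abs (Upsilon_h U p t) = exp (t/p) * exp (- exp (2*t) / 2) * abs (U (exp (2*t)))"
      unfolding Upsilon_h_def by (simp add: abs_mult)
    also have "\<dots> \<le> exp (t/p) * exp (- exp (2*t) / 2) * (B * exp (- 2 * t * kummer_alpha p lam))"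
      by (intro mult_left_mono U) auto
    also have "\<dots> = B * exp (t/p + (- 2 * t * kummer_alpha p lam) + (- exp (2*t) / 2))"
      by (simp only: exp_add ac_simps)
    also have "t/p + (- 2 * t * kummer_alpha p lam) + (- exp (2*t) / 2) = - (1 - lam/2) * t - exp (2*t) / 2"
      unfolding kummer_alpha_def using assms(2) by (simp add: field_simps)
    finally show "abs (Upsilon_h U p t) \<le> B * wfn lam t" unfolding wfn_def .
  qed
qed



lemma den_eq: "(1/2) * exp (- (1 + lam / 2) * t) * exp (exp (2 * t) / 2) = (1/2) * (exp (-2*t) / wfn lam t)"
  unfolding wfn_def by (simp add: exp_diff[symmetric] exp_add[symmetric] field_simps)

lemma Yg_bound_pos:
  assumes "is_Upsilon_g p lam Yh Yg"
  obtains A where "A \<ge> 0" "\<And>t. t \<ge> 0 \<Longrightarrow> abs (Yg t) \<le> A * exp (-2*t) / wfn lam t"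
proof -
  from assms obtain dYg where D: "\<And>t. (Yg has_real_derivative dYg t) (at t)"
    and L: "((\<lambda>t. Yg t / ((1/2) * exp (- (1 + lam / 2) * t) * exp (exp (2 * t) / 2))) \<longlongrightarrow> 1) at_top"
    unfolding is_Upsilon_g_def by blast
  define den where "den t = (1/2) * exp (- (1 + lam / 2) * t) * exp (exp (2 * t) / 2)" for t
  have denpos: "den t > 0" for t unfolding den_def by simp
  have ev: "eventually (\<lambda>t. Yg t / den t < 2 \<and> Yg t / den t > -2) at_top"
    using order_tendstoD(2)[OF L[folded den_def], of 2] order_tendstoD(1)[OF L[folded den_def], of "-2"]
    by (auto elim: eventually_elim2)
  then obtain T where T: "\<And>t. t \<ge> T \<Longrightarrow> Yg t / den t < 2 \<and> Yg t / den t > -2"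
    by (auto simp: eventually_at_top_linorder)
  have big: "abs (Yg t) \<le> 1 * exp (-2*t) / wfn lam t" if "t \<ge> T" for t
  proof -
    have "abs (Yg t / den t) \<le> 2" using T[OF that] by auto
    hence "abs (Yg t) \<le> 2 * den t" using denpos[of t] by (simp add: abs_div field_simps)
    thus ?thesis unfolding den_def den_eq by simp
  qed
  have "continuous_on {0..max 0 T} (\<lambda>t. Yg t * wfn lam t * exp (2*t))"
  proof (intro continuous_on_mult)
    show "continuous_on {0..max 0 T} Yg"
      by (rule continuous_at_imp_continuous_on) (use DERIV_isCont[OF D] in blast)
    show "continuous_on {0..max 0 T} (wfn lam)" unfolding wfn_def[abs_def] by (intro continuous_intros) auto
    show "continuous_on {0..max 0 T} (\<lambda>t. exp (2*t))" by (intro continuous_intros)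
  qed
  then obtain B1 where B1: "B1 \<ge> 0" "\<And>t. t \<in> {0..max 0 T} \<Longrightarrow> norm (Yg t * wfn lam t * exp (2*t)) \<le> B1"
    using continuous_on_compact_bound[OF compact_Icc] by blast
  show ?thesis
  proof (rule that[of "max 1 B1"])
    show "max 1 B1 \<ge> 0" by simp
    fix t :: real assume t: "t \<ge> 0"
    show "abs (Yg t) \<le> max 1 B1 * exp (-2*t) / wfn lam t"
    proof (cases "t \<le> max 0 T")
      case True
      hence "abs (Yg t) * (wfn lam t * exp (2*t)) \<le> B1" using B1(2)[of t] t by (simp add: abs_mult mult.assoc abs_of_pos[OF wfn_pos])
      hence "abs (Yg t) \<le> B1 / (wfn lam t * exp (2*t))" using wfn_pos[of lam t] by (simp add: field_simps)
      also have "\<dots> = B1 * exp (-2*t) / wfn lam t" by (simp add: exp_minus field_simps)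
      also have "\<dots> \<le> max 1 B1 * exp (-2*t) / wfn lam t"
        by (intro divide_right_mono mult_right_mono) (auto simp: less_imp_le[OF wfn_pos])
      finally show ?thesis .
    next
      case False
      hence "abs (Yg t) \<le> 1 * exp (-2*t) / wfn lam t" using big by auto
      also have "\<dots> \<le> max 1 B1 * exp (-2*t) / wfn lam t"
        by (intro divide_right_mono mult_right_mono) (auto simp: less_imp_le[OF wfn_pos])
      finally show ?thesis .
    qed
  qed
qed


lemma powr_mul_self: fixes M p :: real assumes "M \<ge> 0" "p \<ge> 0"
  shows "M powr (2*p) * M = M powr (2*p+1)"
  using assms by (simp add: powr_add)

lemma partA:
  fixes Yh Yg Psi :: "real \<Rightarrow> real" and c p Aa lam C :: real
  assumes p: "p > 0" and lam: "lam \<le> 2" and Aa: "Aa \<ge> 1"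
    and int: "\<And>t. t \<ge> 0 \<Longrightarrow> ((\<lambda>s. (Yh s * Yg t - Yh t * Yg s) * (abs (Psi s) powr (2 * p) * Psi s)) has_integral (Psi t - c * Yh t)) {t..}"
    and Yhb: "\<And>s. s \<ge> 0 \<Longrightarrow> abs (Yh s) \<le> Aa * wfn lam s"
    and Ygb: "\<And>s. s \<ge> 0 \<Longrightarrow> abs (Yg s) \<le> Aa * exp (-2* s) / wfn lam s"
    and cont: "\<And>s. isCont (\<lambda>s. Psi s - c * Yh s) s"
    and dec: "\<And>t. t \<ge> 0 \<Longrightarrow> abs (Psi t - c * Yh t) \<le> C * abs c powr (2 * p + 1) * wfn lam t"
    and small: "2 * Aa^2 * (2*Aa) powr (2*p+1) * abs c powr (2*p) \<le> Aa"
  shows "\<And>s. s \<ge> 0 \<Longrightarrow> abs (Psi s - c * Yh s) \<le> 2 * Aa^2 * (2*Aa) powr (2*p+1) * abs c powr (2*p+1) * wfn lam s"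
proof -
  define Ke where "Ke = 2 * Aa^2 * (2*Aa) powr (2*p+1)"
  define eta where "eta s = Psi s - c * Yh s" for s
  have Ke0: "Ke > 0" unfolding Ke_def using Aa by simp
  have A0: "Aa \<ge> 0" using Aa by simp
  have est: "abs (eta t) \<le> Aa^2 * (M powr (2*p+1)) * wfn lam t * exp (-2*t)"
    if t: "t \<ge> 0" and M: "M \<ge> 0" and PB: "\<And>s. s \<ge> t \<Longrightarrow> abs (Psi s) \<le> M * wfn lam s" for t M
  proof -
    have "abs (eta t) \<le> Aa^2 * (M powr (2*p)) * M * wfn lam t * (wfn lam t powr (2*p)) * exp (-2*t)"
      unfolding eta_def
      by (rule int_est[OF _ A0 M t lam int[OF t] Yhb Ygb PB]) (use p in auto)
    also have "\<dots> \<le> Aa^2 * (M powr (2*p)) * M * wfn lam t * 1 * exp (-2*t)"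
    proof (intro mult_left_mono mult_right_mono)
      show "wfn lam t powr (2*p) \<le> 1"
        using wfn_le1[OF lam t] wfn_pos[of lam t] p by (simp add: powr_le1)
    qed (use M wfn_pos[of lam t] in auto)
    finally show ?thesis using powr_mul_self[OF M, of p] p by (simp add: mult.assoc)
  qed
  show "abs (Psi s - c * Yh s) \<le> 2 * Aa^2 * (2*Aa) powr (2*p+1) * abs c powr (2*p+1) * wfn lam s"
    if s0: "s \<ge> 0" for s
  proof (cases "c = 0")
    case True
    thus ?thesis using dec[OF s0] p by simp
  next
    case False
    define K' where "K' = Ke * abs c powr (2*p+1)"
    have K'pos: "K' > 0" unfolding K'_def using Ke0 False by simp
    have K'le: "K' \<le> Aa * abs c"
    proof -
      have "K' = (Ke * abs c powr (2*p)) * abs c" unfolding K'_def using False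
        by (simp add: powr_add mult.assoc)
      also have "\<dots> \<le> Aa * abs c" using small unfolding Ke_def by (intro mult_right_mono) auto
      finally show ?thesis .
    qed
    define M0 where "M0 = Aa * abs c + abs C * abs c powr (2*p+1)"
    have M0: "M0 \<ge> 0" unfolding M0_def using A0 by simp
    have PB0: "abs (Psi s) \<le> M0 * wfn lam s" if "s \<ge> 0" for s
    proof -
      have "abs (Psi s) \<le> abs (c * Yh s) + abs (eta s)" unfolding eta_def by linarith
      also have "\<dots> \<le> abs c * (Aa * wfn lam s) + abs C * abs c powr (2 * p + 1) * wfn lam s"
      proof (intro add_mono)
        show "abs (c * Yh s) \<le> abs c * (Aa * wfn lam s)" unfolding abs_mult using Yhb[OF that] by (intro mult_left_mono) auto
        have "C * abs c powr (2 * p + 1) * wfn lam s \<le> abs C * abs c powr (2 * p + 1) * wfn lam s"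
          by (intro mult_right_mono) (auto simp: less_imp_le[OF wfn_pos])
        thus "abs (eta s) \<le> abs C * abs c powr (2 * p + 1) * wfn lam s" using dec[OF that] unfolding eta_def by linarith
      qed
      also have "\<dots> = M0 * wfn lam s" unfolding M0_def by (simp add: algebra_simps)
      finally show ?thesis .
    qed
    define X where "X = Aa^2 * (M0 powr (2*p+1))"
    have X0: "X \<ge> 0" unfolding X_def by simp
    define R where "R = ln (X / K' + 1) / 2"
    have R0: "R \<ge> 0" unfolding R_def using X0 K'pos by simp
    have farR: "abs (eta t) < K' * wfn lam t" if "t > R" for t
    proof -
      have t0: "t \<ge> 0" using that R0 by simp
      have "abs (eta t) \<le> X * wfn lam t * exp (-2*t)" unfolding X_def
        using est[OF t0 M0 PB0] t0 by simp
      also have "X * exp (-2*t) < K'"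
      proof -
        have "exp (2*R) = X / K' + 1" unfolding R_def using X0 K'pos by (simp add: divide_nonneg_pos add_nonneg_pos)
        moreover have "exp (2*R) < exp (2*t)" using that by simp
        ultimately have "X / K' + 1 < exp (2*t)" by simp
        hence "X < (exp (2*t) - 1) * K'" using K'pos by (simp add: field_simps)
        hence "X < exp (2*t) * K'" using K'pos by (simp add: algebra_simps)
        thus ?thesis by (simp add: exp_minus field_simps)
      qed
      hence "X * wfn lam t * exp (-2*t) < K' * wfn lam t" using wfn_pos[of lam t]
        by (simp add: mult.commute mult.left_commute)
      finally show ?thesis .
    qed
    define T where "T = {t \<in> {0..R}. abs (eta t) \<ge> K' * wfn lam t}"
    have contphi: "continuous_on UNIV (\<lambda>t. K' * wfn lam t - abs (eta t))"
    proof (rule continuous_at_imp_continuous_on, intro ballI)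
      fix t :: real
      have ce: "isCont eta t" unfolding eta_def[abs_def] by (rule cont)
      show "isCont (\<lambda>t. K' * wfn lam t - abs (eta t)) t"
        unfolding wfn_def by (intro continuous_intros ce) simp
    qed
    have "\<forall>t\<ge>0. abs (eta t) < K' * wfn lam t"
    proof (rule ccontr)
      assume "\<not> (\<forall>t\<ge>0. abs (eta t) < K' * wfn lam t)"
      then obtain t1 where t1: "t1 \<ge> 0" "abs (eta t1) \<ge> K' * wfn lam t1" by auto
      have t1R: "t1 \<le> R"
      proof (rule ccontr)
        assume "\<not> t1 \<le> R"
        hence "abs (eta t1) < K' * wfn lam t1" using farR by simp
        thus False using t1(2) by simp
      qed
      have Tne: "T \<noteq> {}" unfolding T_def using t1 t1R by auto
      have Tbdd: "bdd_above T" unfolding T_def by (rule bdd_aboveI[of _ R]) auto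
      have Tcl: "closed T"
      proof -
        have "T = {0..R} \<inter> {t. K' * wfn lam t - abs (eta t) \<le> 0}" unfolding T_def by auto
        moreover have "closed {t. K' * wfn lam t - abs (eta t) \<le> 0}"
          by (rule closed_Collect_le[OF contphi continuous_on_const])
        ultimately show ?thesis by (simp add: closed_Int)
      qed
      define ts where "ts = Sup T"
      have tsT: "ts \<in> T" unfolding ts_def by (rule closed_contains_Sup[OF Tne Tbdd Tcl])
      hence ts: "ts \<ge> 0" "ts \<le> R" "abs (eta ts) \<ge> K' * wfn lam ts" unfolding T_def by auto
      have after: "abs (eta s) < K' * wfn lam s" if "s > ts" for s
      proof (cases "s \<le> R")
        case True
        have "s \<notin> T" using that cSup_upper[OF _ Tbdd] unfolding ts_def by force
        thus ?thesis using True that ts(1) unfolding T_def by auto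
      next
        case False thus ?thesis using farR by simp
      qed
      have atts: "abs (eta ts) \<le> K' * wfn lam ts"
      proof -
        have lim: "((\<lambda>t. K' * wfn lam t - abs (eta t)) \<longlongrightarrow> K' * wfn lam ts - abs (eta ts)) (at_right ts)"
          using contphi by (simp add: continuous_on_def filterlim_at_split)
        have ev: "eventually (\<lambda>t. K' * wfn lam t - abs (eta t) \<ge> 0) (at_right ts)"
          by (rule eventually_at_rightI[where b="ts + 1"]) (use after in \<open>auto simp: less_imp_le\<close>)
        have "0 \<le> K' * wfn lam ts - abs (eta ts)"
          by (rule tendsto_lowerbound[OF lim ev]) simp
        thus ?thesis by simp
      qed
      have PB: "abs (Psi s) \<le> (2 * Aa * abs c) * wfn lam s" if "s \<ge> ts" for s
      proof -
        have e: "abs (eta s) \<le> K' * wfn lam s"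
          using atts after[of s] that by (cases "s = ts") auto
        have "abs (Psi s) \<le> abs (c * Yh s) + abs (eta s)" unfolding eta_def by linarith
        also have "\<dots> \<le> abs c * (Aa * wfn lam s) + (Aa * abs c) * wfn lam s"
        proof (intro add_mono)
          show "abs (c * Yh s) \<le> abs c * (Aa * wfn lam s)" unfolding abs_mult
            using Yhb[of s] that ts(1) by (intro mult_left_mono) auto
          show "abs (eta s) \<le> (Aa * abs c) * wfn lam s"
            using e mult_right_mono[OF K'le less_imp_le[OF wfn_pos[of lam s]]] by linarith
        qed
        also have "\<dots> = (2 * Aa * abs c) * wfn lam s" by (simp add: algebra_simps)
        finally show ?thesis .
      qed
      have "abs (eta ts) \<le> Aa^2 * ((2 * Aa * abs c) powr (2*p+1)) * wfn lam ts * exp (-2*ts)"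
        by (rule est[OF ts(1) _ PB]) (use A0 in simp)
      also have "\<dots> \<le> Aa^2 * ((2 * Aa * abs c) powr (2*p+1)) * wfn lam ts * 1"
        by (intro mult_left_mono) (use ts(1) wfn_pos[of lam ts] in auto)
      also have "\<dots> = (K' / 2) * wfn lam ts"
        unfolding K'_def Ke_def using A0 by (simp add: powr_mult)
      also have "\<dots> < K' * wfn lam ts" using K'pos wfn_pos[of lam ts] by simp
      finally show False using ts(3) by simp
    qed
    thus ?thesis using s0 unfolding eta_def K'_def Ke_def by (simp add: less_imp_le)
  qed
qed


lemma deriv_bound0:
  fixes eta deta dd :: "real \<Rightarrow> real"
  assumes d1: "\<And>s. (eta has_real_derivative deta s) (at s)"
    and d2: "\<And>s. (deta has_real_derivative dd s) (at s)"
    and eb: "\<And>s. 0 \<le> s \<Longrightarrow> s \<le> 1 \<Longrightarrow> abs (eta s) \<le> E0"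
    and db: "\<And>s. 0 \<le> s \<Longrightarrow> s \<le> 1 \<Longrightarrow> abs (dd s) \<le> D0"
  shows "abs (deta 0) \<le> 2 * E0 + D0"
proof -
  obtain xi where xi: "0 < xi" "xi < 1" "eta 1 - eta 0 = (1 - 0) * deta xi"
    using MVT2[of 0 1 eta deta] d1 by auto
  obtain ze where ze: "0 < ze" "ze < xi" "deta xi - deta 0 = (xi - 0) * dd ze"
    using MVT2[of 0 xi deta dd] d2 xi(1) by auto
  have "abs (deta xi) \<le> 2 * E0" using xi(3) eb[of 1] eb[of 0] by simp
  moreover have "abs (xi * dd ze) \<le> D0"
  proof -
    have "abs (xi * dd ze) = xi * abs (dd ze)" using xi by (simp add: abs_mult)
    also have "\<dots> \<le> 1 * abs (dd ze)" using xi by (intro mult_right_mono) auto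
    also have "\<dots> \<le> D0" using db[of ze] ze xi by simp
    finally show ?thesis .
  qed
  moreover have "deta 0 = deta xi - xi * dd ze" using ze(3) by simp
  ultimately show ?thesis using abs_triangle_ineq4[of "deta xi" "xi * dd ze"] by linarith
qed

lemma q_bound:
  fixes lam s :: real assumes "0 \<le> s" "s \<le> 1"
  shows "abs (1/p^2 - lam * exp (2* s) + exp (4* s)) \<le> 1/p^2 + abs lam * exp 2 + exp 4"
proof -
  have "abs (lam * exp (2* s)) \<le> abs lam * exp 2" using assms by (simp add: abs_mult mult_left_mono)
  moreover have "exp (4* s) \<le> exp 4" using assms by simp
  moreover have "1/p^2 \<ge> 0" by simp
  moreover have "exp (4* s) > 0" by simp
  moreover have "abs (lam * exp (2* s)) \<ge> lam * exp (2* s)" "abs (lam * exp (2* s)) \<ge> - (lam * exp (2* s))" by auto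
  ultimately show ?thesis by (simp only: abs_le_iff) linarith
qed


lemma Nbound:
  fixes Y x c A beta p s :: real
  assumes p: "p > 0" and A: "A \<ge> 0" and beta: "beta \<ge> 0"
    and Yb: "abs Y \<le> A * exp (-s/p)" and xb: "abs x \<le> beta * exp (-s/p)"
  shows "abs (abs (c * Y + x) powr (2*p) * (c * Y + x)) \<le> (A * abs c + beta) powr (2*p+1) * exp (-2* s) * exp (-s/p)"
proof -
  have P: "abs (c * Y + x) \<le> (A * abs c + beta) * exp (-s/p)"
  proof -
    have "abs (c * Y + x) \<le> abs c * abs Y + abs x" by (metis abs_mult abs_triangle_ineq)
    also have "\<dots> \<le> abs c * (A * exp (-s/p)) + beta * exp (-s/p)"
      by (intro add_mono mult_left_mono Yb xb) auto
    finally show ?thesis by (simp add: algebra_simps)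
  qed
  have "abs (abs (c * Y + x) powr (2*p) * (c * Y + x)) = abs (c * Y + x) powr (2*p+1)"
    using p by (simp add: abs_mult powr_add)
  also have "\<dots> \<le> ((A * abs c + beta) * exp (-s/p)) powr (2*p+1)"
    by (rule powr_mono2) (use P p in auto)
  also have "\<dots> = (A * abs c + beta) powr (2*p+1) * exp (-s/p) powr (2*p+1)"
    using A beta by (simp add: powr_mult)
  also have "exp (-s/p) powr (2*p+1) = exp (-2* s) * exp (-s/p)"
    using p by (simp add: powr_def exp_add[symmetric] field_simps)
  finally show ?thesis by (simp add: mult.assoc)
qed

lemma qm_bound:
  fixes s lam :: real assumes "s \<le> 0"
  shows "abs (exp (4* s) - lam * exp (2* s)) \<le> (1 + abs lam) * exp (2* s)"
proof -
  have e: "exp (4* s) = exp (2* s) * exp (2* s)" by (simp flip: exp_add)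
  have "exp (2* s) \<le> 1" using assms by simp
  hence "exp (4* s) \<le> exp (2* s)" unfolding e by (simp add: mult_le_cancel_left1)
  moreover have "abs (lam * exp (2* s)) = abs lam * exp (2* s)" by (simp add: abs_mult)
  moreover have "exp (4* s) > 0" by simp
  moreover have "abs (exp (4 * s) - lam * exp (2 * s)) \<le> abs (exp (4 * s)) + abs (lam * exp (2 * s))"
    by (rule abs_triangle_ineq4)
  moreover have "(1 + abs lam) * exp (2 * s) = exp (2 * s) + abs lam * exp (2 * s)" by (simp add: algebra_simps)
  moreover have "abs (exp (4 * s)) = exp (4 * s)" by simp
  ultimately show ?thesis by linarith
qed



lemma bootstrap:
  fixes x dx Yh :: "real \<Rightarrow> real" and p lam c A L beta eps :: real
  assumes p: "p > 0" and L: "L \<ge> 0" and A: "A \<ge> 0" and beta: "beta > 0" and eps: "eps > 0"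
    and dx: "\<And>s. (x has_real_derivative dx s) (at s)"
    and ddx: "\<And>s. (dx has_real_derivative (x s / p^2 + ((exp (4* s) - lam * exp (2* s)) * x s
                 - abs (c * Yh s + x s) powr (2*p) * (c * Yh s + x s)))) (at s)"
    and Yhb: "\<And>s. s \<le> 0 \<Longrightarrow> abs (Yh s) \<le> A * exp (-s/p)"
    and close: "exp (p * (1 + abs lam) / 2) * (sqrt (p^2 * (dx 0)^2 + (x 0)^2 + eps)
                  + p * (A * abs c + beta) powr (2*p+1) * exp (2*L) / 2) < beta"
  shows "\<And>t. -L \<le> t \<Longrightarrow> t \<le> 0 \<Longrightarrow> sqrt (p^2 * (dx t)^2 + (x t)^2 + eps)
            \<le> exp (p * (1 + abs lam) / 2) * exp (-t/p) * (sqrt (p^2 * (dx 0)^2 + (x 0)^2 + eps)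
                  + p * (A * abs c + beta) powr (2*p+1) * exp (2*L) / 2)"
proof -
  define k where "k = 1 + abs lam"
  define Q where "Q = (A * abs c + beta) powr (2*p+1)"
  define F0 where "F0 = sqrt (p^2 * (dx 0)^2 + (x 0)^2 + eps)"
  define B where "B = exp (p * k / 2) * (F0 + p * Q * exp (2*L) / 2)"
  have k: "k \<ge> 0" unfolding k_def by simp
  have Q: "Q \<ge> 0" unfolding Q_def by simp
  have Bb: "B < beta" using close unfolding B_def k_def Q_def F0_def .
  have xF: "abs (x t) \<le> sqrt (p^2 * (dx t)^2 + (x t)^2 + eps)" for t
    by (rule real_le_rsqrt) (use eps in \<open>simp add: power2_eq_square\<close>)
  have step: "sqrt (p^2 * (dx t)^2 + (x t)^2 + eps) \<le> B * exp (-t/p)"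
    if t: "-L \<le> t" "t \<le> 0" and hyp: "\<And>s. t < s \<Longrightarrow> s < 0 \<Longrightarrow> abs (x s) \<le> beta * exp (-s/p)" for t
  proof -
    have "sqrt (p^2 * (dx t)^2 + (x t)^2 + eps) \<le> exp (p*k/2) * exp (-t/p) * (F0 + p * Q * exp (-2*t) / 2)"
      unfolding F0_def
    proof (rule energy_comparison[OF p k Q eps t(2) dx, where r = "\<lambda>s. (exp (4* s) - lam * exp (2* s)) * x s
                 - abs (c * Yh s + x s) powr (2*p) * (c * Yh s + x s)"])
      show "(dx has_real_derivative (x s / p^2 + ((exp (4* s) - lam * exp (2* s)) * x s
                 - abs (c * Yh s + x s) powr (2*p) * (c * Yh s + x s)))) (at s)" for s
        by (rule ddx)
      fix s assume s: "t < s" "s < 0"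
      have "abs ((exp (4* s) - lam * exp (2* s)) * x s - abs (c * Yh s + x s) powr (2*p) * (c * Yh s + x s))
         \<le> abs ((exp (4* s) - lam * exp (2* s)) * x s) + abs (abs (c * Yh s + x s) powr (2*p) * (c * Yh s + x s))"
        by (rule abs_triangle_ineq4)
      also have "\<dots> \<le> k * exp (2* s) * abs (x s) + Q * exp (-2* s) * exp (-s/p)"
      proof (rule add_mono)
        show "abs ((exp (4* s) - lam * exp (2* s)) * x s) \<le> k * exp (2* s) * abs (x s)"
          unfolding abs_mult k_def by (rule mult_right_mono[OF qm_bound]) (use s t in auto)
        show "abs (abs (c * Yh s + x s) powr (2*p) * (c * Yh s + x s)) \<le> Q * exp (-2* s) * exp (-s/p)"
          unfolding Q_def by (rule Nbound[OF p A less_imp_le[OF beta] Yhb hyp]) (use s t in auto)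
      qed
      finally show "abs ((exp (4* s) - lam * exp (2* s)) * x s - abs (c * Yh s + x s) powr (2*p) * (c * Yh s + x s))
         \<le> k * exp (2* s) * abs (x s) + Q * exp (-2* s) * exp (-s/p)" .
    qed
    also have "\<dots> \<le> exp (p*k/2) * exp (-t/p) * (F0 + p * Q * exp (2*L) / 2)"
    proof -
      have "exp (-2*t) \<le> exp (2*L)" using t by simp
      hence "p * Q * exp (-2*t) / 2 \<le> p * Q * exp (2*L) / 2" using p Q by (simp add: mult_left_mono)
      thus ?thesis by (intro mult_left_mono) auto
    qed
    also have "\<dots> = B * exp (-t/p)" unfolding B_def by (simp add: algebra_simps)
    finally show ?thesis .
  qed
  have all: "\<forall>t\<in>{-L..0}. abs (x t) < beta * exp (-t/p)"
  proof (rule ccontr)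
    assume "\<not> (\<forall>t\<in>{-L..0}. abs (x t) < beta * exp (-t/p))"
    then obtain t1 where t1: "t1 \<in> {-L..0}" "abs (x t1) \<ge> beta * exp (-t1/p)" by auto
    define T where "T = {t \<in> {-L..0}. abs (x t) \<ge> beta * exp (-t/p)}"
    have Tne: "T \<noteq> {}" unfolding T_def using t1 by auto
    have Tbdd: "bdd_above T" unfolding T_def by (rule bdd_aboveI[of _ 0]) auto
    have contx: "continuous_on UNIV x"
      by (rule continuous_at_imp_continuous_on) (use DERIV_isCont[OF dx] in blast)
    have Tcl: "closed T"
    proof -
      have "T = {-L..0} \<inter> {t. beta * exp (-t/p) \<le> abs (x t)}" unfolding T_def by auto
      moreover have "closed {t. beta * exp (-t/p) \<le> abs (x t)}"
        by (rule closed_Collect_le) (use p contx in \<open>auto intro!: continuous_intros\<close>)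
      ultimately show ?thesis by (simp add: closed_Int)
    qed
    define ts where "ts = Sup T"
    have tsT: "ts \<in> T" unfolding ts_def by (rule closed_contains_Sup[OF Tne Tbdd Tcl])
    hence ts: "-L \<le> ts" "ts \<le> 0" "abs (x ts) \<ge> beta * exp (-ts/p)" unfolding T_def by auto
    have "abs (x s) \<le> beta * exp (-s/p)" if "ts < s" "s < 0" for s
    proof -
      have "s \<notin> T" using that cSup_upper[OF _ Tbdd] unfolding ts_def by force
      thus ?thesis using that ts unfolding T_def by auto
    qed
    hence "sqrt (p^2 * (dx ts)^2 + (x ts)^2 + eps) \<le> B * exp (-ts/p)" by (intro step ts(1,2))
    hence "abs (x ts) \<le> B * exp (-ts/p)" using xF[of ts] by linarith
    also have "\<dots> < beta * exp (-ts/p)" using Bb by simp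
    finally show False using ts(3) by simp
  qed
  fix t assume t: "-L \<le> t" "t \<le> 0"
  have "sqrt (p^2 * (dx t)^2 + (x t)^2 + eps) \<le> B * exp (-t/p)"
  proof (rule step[OF t])
    fix s assume s: "t < s" "s < 0"
    hence "s \<in> {-L..0}" using t by auto
    thus "abs (x s) \<le> beta * exp (-s/p)" using all by (auto intro: less_imp_le)
  qed
  thus "sqrt (p^2 * (dx t)^2 + (x t)^2 + eps)
            \<le> exp (p * (1 + abs lam) / 2) * exp (-t/p) * (sqrt (p^2 * (dx 0)^2 + (x 0)^2 + eps)
                  + p * (A * abs c + beta) powr (2*p+1) * exp (2*L) / 2)"
    unfolding B_def k_def Q_def F0_def by (simp add: algebra_simps)
qed


lemma Yh_bound_neg:
  fixes Yh dYh :: "real \<Rightarrow> real" and p lam :: real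
  assumes p: "p > 0"
    and d1: "\<And>s. (Yh has_real_derivative dYh s) (at s)"
    and d2: "\<And>s. (dYh has_real_derivative ((1/p^2 - lam * exp (2* s) + exp (4* s)) * Yh s)) (at s)"
  obtains Ah where "Ah \<ge> 1" "\<And>t. t \<le> 0 \<Longrightarrow> abs (Yh t) \<le> Ah * exp (-t/p)"
proof -
  define Ah where "Ah = max 1 (exp (p * (1 + abs lam) / 2) * (sqrt (p^2 * (dYh 0)^2 + (Yh 0)^2 + 1) + p * 0 * exp (-2*0) / 2))"
  show ?thesis
  proof (rule that[of Ah])
    show "Ah \<ge> 1" unfolding Ah_def by simp
    fix t :: real assume t: "t \<le> 0"
    have "sqrt (p^2 * (dYh t)^2 + (Yh t)^2 + 1) \<le> exp (p * (1 + abs lam) / 2) * exp (-t/p) * (sqrt (p^2 * (dYh 0)^2 + (Yh 0)^2 + 1) + p * 0 * exp (-2*t) / 2)"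
    proof (rule energy_comparison[OF p _ _ _ t d1, where r = "\<lambda>s. (exp (4* s) - lam * exp (2* s)) * Yh s"])
      show "(dYh has_real_derivative (Yh s / p^2 + (exp (4* s) - lam * exp (2* s)) * Yh s)) (at s)" for s
        by (rule DERIV_cong[OF d2]) (simp add: algebra_simps)
      fix s assume s: "t < s" "s < 0"
      have "abs ((exp (4* s) - lam * exp (2* s)) * Yh s) \<le> (1 + abs lam) * exp (2* s) * abs (Yh s)"
        unfolding abs_mult by (rule mult_right_mono[OF qm_bound]) (use s in auto)
      thus "abs ((exp (4* s) - lam * exp (2* s)) * Yh s) \<le> (1 + abs lam) * exp (2* s) * abs (Yh s) + 0 * exp (-2* s) * exp (-s/p)"
        by simp
    qed auto
    moreover have "abs (Yh t) \<le> sqrt (p^2 * (dYh t)^2 + (Yh t)^2 + 1)"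
      by (rule real_le_rsqrt) (simp add: power2_eq_square)
    ultimately have "abs (Yh t) \<le> exp (p * (1 + abs lam) / 2) * (sqrt (p^2 * (dYh 0)^2 + (Yh 0)^2 + 1) + p * 0 * exp (-2*0) / 2) * exp (-t/p)"
      by (simp add: algebra_simps)
    also have "\<dots> \<le> Ah * exp (-t/p)" unfolding Ah_def by (intro mult_right_mono) auto
    finally show "abs (Yh t) \<le> Ah * exp (-t/p)" .
  qed
qed

lemma sqrt3_le: fixes a b e :: real assumes e: "e \<ge> 0"
  shows "sqrt (a^2 + b^2 + e) \<le> abs a + abs b + sqrt e"
proof -
  have se: "(sqrt e)^2 = e" using e by simp
  have "a^2 + b^2 + e \<le> (abs a + abs b + sqrt e)^2"
  proof -
    have "(abs a + abs b + sqrt e)^2 = a^2 + b^2 + (sqrt e)^2 + 2 * abs a * abs b + 2 * abs a * sqrt e + 2 * abs b * sqrt e"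
      by (simp add: power2_eq_square algebra_simps)
    moreover have "2 * abs a * abs b + 2 * abs a * sqrt e + 2 * abs b * sqrt e \<ge> 0" using e by simp
    ultimately show ?thesis using se by linarith
  qed
  hence "sqrt (a^2 + b^2 + e) \<le> sqrt ((abs a + abs b + sqrt e)^2)" by (rule real_sqrt_le_mono)
  also have "\<dots> = abs a + abs b + sqrt e" using e by simp
  finally show ?thesis .
qed



lemma zero_by_powr:
  fixes y G b1 r :: real
  assumes b1: "b1 > 0" and r: "r > 0" and H: "\<And>b. 0 < b \<Longrightarrow> b < b1 \<Longrightarrow> y \<le> G * b powr r"
  shows "y \<le> 0"
proof -
  have lim: "((\<lambda>b. G * b powr r) \<longlongrightarrow> G * 0) (at_right 0)"
    by (intro tendsto_mult tendsto_const tendsto_zero_powrI[OF _ tendsto_const _ r])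
       (auto intro: tendsto_ident_at eventually_at_rightI[where b=1] simp: less_imp_le)
  have ev: "eventually (\<lambda>b. y \<le> G * b powr r) (at_right 0)"
    by (rule eventually_at_rightI[where b=b1]) (use H b1 in auto)
  show ?thesis using tendsto_lowerbound[OF lim ev] by simp
qed



lemma core:
  fixes Yh dYh Yg Psi dPsi :: "real \<Rightarrow> real" and p lam c C0 Aa Ah L :: real
  assumes p: "p > 0" and lam: "lam \<le> 2" and L: "L \<ge> 0" and Aa: "Aa \<ge> 1" and Ah: "Ah \<ge> 1"
    and dY1: "\<And>s. (Yh has_real_derivative dYh s) (at s)"
    and dY2: "\<And>s. (dYh has_real_derivative ((1/p^2 - lam * exp (2* s) + exp (4* s)) * Yh s)) (at s)"
    and Yhp: "\<And>s. s \<ge> 0 \<Longrightarrow> abs (Yh s) \<le> Aa * wfn lam s"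
    and Ygp: "\<And>s. s \<ge> 0 \<Longrightarrow> abs (Yg s) \<le> Aa * exp (-2* s) / wfn lam s"
    and Yhn: "\<And>s. s \<le> 0 \<Longrightarrow> abs (Yh s) \<le> Ah * exp (-s/p)"
    and dP1: "\<And>s. (Psi has_real_derivative dPsi s) (at s)"
    and dP2: "\<And>s. (dPsi has_real_derivative (Psi s / p^2 - abs (Psi s) powr (2 * p) * Psi s
                     - lam * exp (2 * s) * Psi s + exp (4 * s) * Psi s)) (at s)"
    and int: "\<And>t. t \<ge> 0 \<Longrightarrow> ((\<lambda>s. (Yh s * Yg t - Yh t * Yg s) * (abs (Psi s) powr (2 * p) * Psi s)) has_integral (Psi t - c * Yh t)) {t..}"
    and dec: "\<And>t. t \<ge> 0 \<Longrightarrow> abs (Psi t - c * Yh t) \<le> C0 * abs c powr (2 * p + 1) * exp (- (1 - lam / 2) * t) * exp (- exp (2 * t) / 2)"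
  defines "Ke \<equiv> 2 * Aa^2 * (2*Aa) powr (2*p+1)"
    and "qm \<equiv> 1/p^2 + abs lam * exp 2 + exp 4"
  defines "K1 \<equiv> 2 * Ke + (qm * Ke + (2*Aa) powr (2*p+1))"
  defines "K2 \<equiv> p * K1 + Ke + 1"
    and "m0 \<equiv> exp (p * (1 + abs lam) / 2)"
  defines "D \<equiv> m0 * (K2 + p * (2 * Ah) powr (2*p+1) / 2)"
  assumes sm1: "Ke * abs c powr (2*p) \<le> Aa"
    and sm2: "D * exp (2*L) * abs c powr (2*p) < Ah"
  shows "\<And>t. -L \<le> t \<Longrightarrow> t \<le> 0 \<Longrightarrow>
           abs (Psi t - c * Yh t) \<le> (D * max 1 (1/p)) * abs c powr (2*p+1) * exp (2*L) * exp (-t/p)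
         \<and> abs (dPsi t - c * dYh t) \<le> (D * max 1 (1/p)) * abs c powr (2*p+1) * exp (2*L) * exp (-t/p)"
proof -
  define eta where "eta s = Psi s - c * Yh s" for s
  define deta where "deta s = dPsi s - c * dYh s" for s
  define dd where "dd s = (1/p^2 - lam * exp (2* s) + exp (4* s)) * eta s - abs (Psi s) powr (2 * p) * Psi s" for s
  have de1: "(eta has_real_derivative deta s) (at s)" for s
    unfolding eta_def[abs_def] deta_def by (intro DERIV_diff DERIV_cmult dP1 dY1)
  have de2: "(deta has_real_derivative dd s) (at s)" for s
    unfolding deta_def[abs_def] dd_def
    by (rule DERIV_cong[OF DERIV_diff[OF dP2 DERIV_cmult[OF dY2]]]) (simp add: eta_def algebra_simps diff_divide_distrib)
  have A0: "Aa \<ge> 0" using Aa by simp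
  have Ke0: "Ke \<ge> 0" unfolding Ke_def by simp
  have qm0: "qm \<ge> 0" unfolding qm_def by simp
  have etaA: "abs (eta s) \<le> Ke * abs c powr (2*p+1) * wfn lam s" if "s \<ge> 0" for s
    unfolding eta_def Ke_def
  proof (rule partA[OF p lam Aa int Yhp Ygp _ _ _ that])
    show "isCont (\<lambda>s. Psi s - c * Yh s) s" for s using DERIV_isCont[OF de1[of s]] unfolding eta_def[abs_def] .
    show "abs (Psi t - c * Yh t) \<le> C0 * abs c powr (2 * p + 1) * wfn lam t" if "t \<ge> 0" for t
      using dec[OF that] unfolding mult.assoc[of _ "exp _" "exp _", symmetric] by (simp only: wfn_alt mult.assoc)
    show "2 * Aa^2 * (2*Aa) powr (2*p+1) * abs c powr (2*p) \<le> Aa" using sm1 unfolding Ke_def .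
  qed auto
  have Kc: "Ke * abs c powr (2*p+1) \<le> Aa * abs c"
  proof -
    have "Ke * abs c powr (2*p+1) = (Ke * abs c powr (2*p)) * abs c"
      using p by (cases "c = 0") (auto simp: powr_add)
    also have "\<dots> \<le> Aa * abs c" using sm1 by (intro mult_right_mono) auto
    finally show ?thesis .
  qed
  have eta01: "abs (eta s) \<le> Ke * abs c powr (2*p+1)" if "0 \<le> s" "s \<le> 1" for s
  proof -
    have "abs (eta s) \<le> Ke * abs c powr (2*p+1) * wfn lam s" by (rule etaA) (use that in simp)
    also have "\<dots> \<le> Ke * abs c powr (2*p+1) * 1"
      by (intro mult_left_mono wfn_le1[OF lam]) (use that Ke0 in auto)
    finally show ?thesis by simp
  qed
  have Psi01: "abs (Psi s) \<le> 2 * Aa * abs c" if "0 \<le> s" "s \<le> 1" for s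
  proof -
    have "abs (Psi s) \<le> abs c * abs (Yh s) + abs (eta s)" unfolding eta_def by (simp add: abs_mult[symmetric])
    also have "\<dots> \<le> abs c * Aa + Aa * abs c"
    proof (intro add_mono mult_left_mono)
      have "abs (Yh s) \<le> Aa * wfn lam s" using Yhp that by simp
      also have "\<dots> \<le> Aa * 1" by (intro mult_left_mono wfn_le1[OF lam]) (use that A0 in auto)
      finally show "abs (Yh s) \<le> Aa" by simp
      show "abs (eta s) \<le> Aa * abs c" using eta01[OF that] Kc by linarith
    qed auto
    finally show ?thesis by simp
  qed
  have dd01: "abs (dd s) \<le> qm * (Ke * abs c powr (2*p+1)) + (2 * Aa) powr (2*p+1) * abs c powr (2*p+1)"
    if "0 \<le> s" "s \<le> 1" for s
  proof -
    have "abs (dd s) \<le> abs ((1/p^2 - lam * exp (2* s) + exp (4* s)) * eta s) + abs (abs (Psi s) powr (2 * p) * Psi s)"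
      unfolding dd_def by (rule abs_triangle_ineq4)
    also have "\<dots> \<le> qm * (Ke * abs c powr (2*p+1)) + (2 * Aa * abs c) powr (2*p+1)"
    proof (rule add_mono)
      show "abs ((1/p^2 - lam * exp (2* s) + exp (4* s)) * eta s) \<le> qm * (Ke * abs c powr (2*p+1))"
        unfolding abs_mult qm_def by (intro mult_mono q_bound eta01 that) auto
      have "abs (abs (Psi s) powr (2 * p) * Psi s) = abs (Psi s) powr (2*p+1)"
        using p by (simp add: abs_mult powr_add)
      also have "\<dots> \<le> (2 * Aa * abs c) powr (2*p+1)"
        by (rule powr_mono2) (use p Psi01[OF that] in auto)
      finally show "abs (abs (Psi s) powr (2 * p) * Psi s) \<le> (2 * Aa * abs c) powr (2*p+1)" .
    qed
    also have "(2 * Aa * abs c) powr (2*p+1) = (2 * Aa) powr (2*p+1) * abs c powr (2*p+1)"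
      using A0 by (simp add: powr_mult)
    finally show ?thesis .
  qed
  have deta0: "abs (deta 0) \<le> K1 * abs c powr (2*p+1)"
  proof -
    have "abs (deta 0) \<le> 2 * (Ke * abs c powr (2*p+1)) + (qm * (Ke * abs c powr (2*p+1)) + (2 * Aa) powr (2*p+1) * abs c powr (2*p+1))"
      by (rule deriv_bound0[OF de1 de2 eta01 dd01])
    thus ?thesis unfolding K1_def by (simp add: algebra_simps)
  qed
  have eta0: "abs (eta 0) \<le> Ke * abs c powr (2*p+1)" using eta01[of 0] by simp
  have ddx: "(deta has_real_derivative (eta s / p^2 + ((exp (4* s) - lam * exp (2* s)) * eta s
                 - abs (c * Yh s + eta s) powr (2*p) * (c * Yh s + eta s)))) (at s)" for s
  proof -
    have "c * Yh s + eta s = Psi s" unfolding eta_def by simp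
    thus ?thesis using de2[of s] unfolding dd_def by (simp add: algebra_simps)
  qed
  show "abs (Psi t - c * Yh t) \<le> (D * max 1 (1/p)) * abs c powr (2*p+1) * exp (2*L) * exp (-t/p)
         \<and> abs (dPsi t - c * dYh t) \<le> (D * max 1 (1/p)) * abs c powr (2*p+1) * exp (2*L) * exp (-t/p)"
    if t: "-L \<le> t" "t \<le> 0" for t
  proof (cases "c = 0")
    case False
    define cp where "cp = abs c powr (2*p+1)"
    have cp0: "cp > 0" unfolding cp_def using False by simp
    have cpx: "cp = abs c powr (2*p) * abs c" unfolding cp_def using False by (simp add: powr_add)
    define eps where "eps = cp^2"
    have eps0: "eps > 0" unfolding eps_def using cp0 by simp
    have Ah0: "Ah \<ge> 0" using Ah by simp
    have beta0: "Ah * abs c > 0" using Ah False by simp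
    have e2L: "exp (2*L) \<ge> 1" using L by simp
    have m00: "m0 > 0" unfolding m0_def by simp
    have Ahc: "(Ah * abs c + Ah * abs c) powr (2*p+1) = (2 * Ah) powr (2*p+1) * cp"
    proof -
      have "Ah * abs c + Ah * abs c = (2 * Ah) * abs c" by simp
      thus ?thesis unfolding cp_def using Ah0 by (simp add: powr_mult)
    qed
    define F0 where "F0 = sqrt (p^2 * (deta 0)^2 + (eta 0)^2 + eps)"
    have F0b: "F0 \<le> K2 * cp"
    proof -
      have "F0 = sqrt ((p * deta 0)^2 + (eta 0)^2 + eps)" unfolding F0_def by (simp add: power_mult_distrib)
      also have "\<dots> \<le> abs (p * deta 0) + abs (eta 0) + sqrt eps" by (rule sqrt3_le) (use eps0 in simp)
      also have "\<dots> \<le> p * (K1 * cp) + Ke * cp + cp"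
      proof (intro add_mono)
        show "abs (p * deta 0) \<le> p * (K1 * cp)" unfolding abs_mult cp_def using deta0 p by (simp add: mult_left_mono)
        show "abs (eta 0) \<le> Ke * cp" using eta0 unfolding cp_def .
        show "sqrt eps \<le> cp" unfolding eps_def using cp0 by simp
      qed
      also have "\<dots> = K2 * cp" unfolding K2_def by (simp add: algebra_simps)
      finally show ?thesis .
    qed
    have Gb: "m0 * (F0 + p * (Ah * abs c + Ah * abs c) powr (2*p+1) * exp (2*L) / 2) \<le> D * cp * exp (2*L)"
    proof -
      have "F0 \<le> K2 * cp * exp (2*L)"
        using F0b mult_left_mono[OF e2L, of "K2 * cp"] K2_def Ke0 cp0 p qm0 unfolding K1_def
        by (simp add: mult_nonneg_nonneg)
      hence "F0 + p * (Ah * abs c + Ah * abs c) powr (2*p+1) * exp (2*L) / 2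
           \<le> K2 * cp * exp (2*L) + p * ((2 * Ah) powr (2*p+1) * cp) * exp (2*L) / 2" unfolding Ahc by simp
      hence "m0 * (F0 + p * (Ah * abs c + Ah * abs c) powr (2*p+1) * exp (2*L) / 2)
           \<le> m0 * (K2 * cp * exp (2*L) + p * ((2 * Ah) powr (2*p+1) * cp) * exp (2*L) / 2)"
        using m00 by (intro mult_left_mono) auto
      also have "\<dots> = D * cp * exp (2*L)" unfolding D_def by (simp add: algebra_simps)
      finally show ?thesis .
    qed
    have close: "m0 * (F0 + p * (Ah * abs c + Ah * abs c) powr (2*p+1) * exp (2*L) / 2) < Ah * abs c"
    proof -
      have "D * cp * exp (2*L) = (D * exp (2*L) * abs c powr (2*p)) * abs c" unfolding cpx by (simp add: algebra_simps)
      also have "\<dots> < Ah * abs c" using sm2 False by (intro mult_strict_right_mono) auto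
      finally show ?thesis using Gb by linarith
    qed
    have BS: "sqrt (p^2 * (deta t)^2 + (eta t)^2 + eps)
            \<le> exp (p * (1 + abs lam) / 2) * exp (-t/p) * (sqrt (p^2 * (deta 0)^2 + (eta 0)^2 + eps)
                  + p * (Ah * abs c + Ah * abs c) powr (2*p+1) * exp (2*L) / 2)"
      by (rule bootstrap[OF p L Ah0 beta0 eps0 de1 ddx Yhn _ t]) (use close in \<open>unfold m0_def F0_def\<close>)
    also have "\<dots> = exp (-t/p) * (m0 * (F0 + p * (Ah * abs c + Ah * abs c) powr (2*p+1) * exp (2*L) / 2))"
      unfolding m0_def F0_def by (simp only: ac_simps)
    also have "\<dots> \<le> exp (-t/p) * (D * cp * exp (2*L))"
      by (rule mult_left_mono[OF Gb]) simp
    finally have Ft: "sqrt (p^2 * (deta t)^2 + (eta t)^2 + eps) \<le> D * cp * exp (2*L) * exp (-t/p)"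
      by (simp only: ac_simps)
    have x1: "abs (eta t) \<le> sqrt (p^2 * (deta t)^2 + (eta t)^2 + eps)"
      by (rule real_le_rsqrt) (use eps0 in \<open>simp add: power2_eq_square\<close>)
    have x2: "p * abs (deta t) \<le> sqrt (p^2 * (deta t)^2 + (eta t)^2 + eps)"
    proof (rule real_le_rsqrt)
      have "(p * abs (deta t))^2 = p^2 * (deta t)^2" by (simp add: power_mult_distrib)
      thus "(p * abs (deta t))^2 \<le> p^2 * (deta t)^2 + (eta t)^2 + eps" using eps0 by simp
    qed
    define R where "R = D * cp * exp (2*L) * exp (-t/p)"
    have R0: "R \<ge> 0" unfolding R_def D_def K2_def K1_def m0_def using Ke0 qm0 p cp0 by simp
    have "abs (eta t) \<le> R" using x1 Ft unfolding R_def by linarith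
    also have "R \<le> max 1 (1/p) * R" using mult_right_mono[OF max.cobounded1[of 1 "1/p"] R0] by simp
    finally have r1: "abs (eta t) \<le> max 1 (1/p) * R" .
    have "p * abs (deta t) \<le> R" using x2 Ft unfolding R_def by linarith
    hence "abs (deta t) \<le> (1/p) * R" using p by (simp add: field_simps)
    also have "\<dots> \<le> max 1 (1/p) * R" using R0 by (intro mult_right_mono) auto
    finally have r2: "abs (deta t) \<le> max 1 (1/p) * R" .
    show ?thesis using r1 r2 unfolding R_def eta_def deta_def cp_def by (simp add: algebra_simps)
  next
    case True
    have e00: "eta 0 = 0" using eta0 True p by simp
    have d00: "deta 0 = 0" using deta0 True p by simp
    define G where "G = m0 * (1 + p * exp (2*L) / 2)"
    have G0: "G > 0" unfolding G_def m0_def using p by (simp add: add_pos_nonneg)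
    define b1 where "b1 = (1/G) powr (1/(2*p))"
    have b10: "b1 > 0" unfolding b1_def using G0 by simp
    have Ah0: "Ah \<ge> 0" using Ah by simp
    have H: "abs (eta t) \<le> (G * exp (-t/p)) * b powr (2*p+1) \<and> p * abs (deta t) \<le> (G * exp (-t/p)) * b powr (2*p+1)"
      if b: "0 < b" "b < b1" for b
    proof -
      define eps where "eps = (b powr (2*p+1))^2"
      have eps0: "eps > 0" unfolding eps_def using b by simp
      have F0: "sqrt (p^2 * (deta 0)^2 + (eta 0)^2 + eps) = b powr (2*p+1)"
        unfolding eps_def e00 d00 using b by simp
      have cb: "Ah * abs c + b = b" using True by simp
      have bx: "b powr (2*p+1) = b powr (2*p) * b" using b by (simp add: powr_add)
      have bG: "G * b powr (2*p) < 1"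
      proof -
        have "b powr (2*p) < b1 powr (2*p)" using b p by (intro powr_less_mono2) auto
        also have "b1 powr (2*p) = 1/G" unfolding b1_def using G0 p by (simp add: powr_powr)
        finally show ?thesis using G0 by (simp add: field_simps)
      qed
      have close: "exp (p * (1 + abs lam) / 2) * (sqrt (p^2 * (deta 0)^2 + (eta 0)^2 + eps)
                  + p * (Ah * abs c + b) powr (2*p+1) * exp (2*L) / 2) < b"
      proof -
        have "exp (p * (1 + abs lam) / 2) * (sqrt (p^2 * (deta 0)^2 + (eta 0)^2 + eps)
                  + p * (Ah * abs c + b) powr (2*p+1) * exp (2*L) / 2) = (G * b powr (2*p)) * b"
          unfolding F0 cb bx G_def m0_def by (simp add: algebra_simps)
        also have "\<dots> < 1 * b" using bG b by (intro mult_strict_right_mono) auto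
        finally show ?thesis by simp
      qed
      have BS: "sqrt (p^2 * (deta t)^2 + (eta t)^2 + eps)
            \<le> exp (p * (1 + abs lam) / 2) * exp (-t/p) * (sqrt (p^2 * (deta 0)^2 + (eta 0)^2 + eps)
                  + p * (Ah * abs c + b) powr (2*p+1) * exp (2*L) / 2)"
        by (rule bootstrap[OF p L Ah0 b(1) eps0 de1 ddx Yhn close t])
      also have "\<dots> = (G * exp (-t/p)) * b powr (2*p+1)"
        unfolding F0 cb bx G_def m0_def by (simp add: algebra_simps)
      finally have Ft: "sqrt (p^2 * (deta t)^2 + (eta t)^2 + eps) \<le> (G * exp (-t/p)) * b powr (2*p+1)" .
      have x1: "abs (eta t) \<le> sqrt (p^2 * (deta t)^2 + (eta t)^2 + eps)"
        by (rule real_le_rsqrt) (use eps0 in \<open>simp add: power2_eq_square\<close>)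
      have x2: "p * abs (deta t) \<le> sqrt (p^2 * (deta t)^2 + (eta t)^2 + eps)"
      proof (rule real_le_rsqrt)
        have "(p * abs (deta t))^2 = p^2 * (deta t)^2" by (simp add: power_mult_distrib)
        thus "(p * abs (deta t))^2 \<le> p^2 * (deta t)^2 + (eta t)^2 + eps" using eps0 by simp
      qed
      show ?thesis using x1 x2 Ft by linarith
    qed
    have r: "2*p+1 > 0" using p by simp
    have z1: "abs (eta t) \<le> 0" by (rule zero_by_powr[OF b10 r]) (use H in blast)
    have z2: "p * abs (deta t) \<le> 0" by (rule zero_by_powr[OF b10 r]) (use H in blast)
    hence "abs (deta t) \<le> 0" using p by (simp add: mult_le_0_iff)
    thus ?thesis using z1 True p unfolding eta_def deta_def by simp
  qed
qed



theorem mainTheorem8: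
  fixes lam p a :: real and U Yg :: "real \<Rightarrow> real"
  assumes "lam \<le> 2" and "p > 0" and "0 < a" and "a < 1"
    and "is_tricomi_U (kummer_alpha p lam) (kummer_beta p) U"
    and "is_Upsilon_g p lam (Upsilon_h U p) Yg"
  shows "\<exists>b0>0. \<exists>C>0. \<forall>b\<ge>b0. \<exists>c0>0. \<forall>c Psi.
           \<bar>c\<bar> < c0 * b powr (- (1 - a)) \<longrightarrow> is_Psi_c p lam (Upsilon_h U p) Yg c Psi \<longrightarrow>
           (\<forall>t\<in>{- (1 - a) * p * ln b .. 0}.
              \<bar>Psi t - c * Upsilon_h U p t\<bar>
                \<le> C * \<bar>c\<bar> powr (2 * p + 1) * b powr (2 * p * (1 - a)) * exp (- t / p)
            \<and> \<bar>deriv Psi t - c * deriv (Upsilon_h U p) t\<bar>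
                \<le> C * \<bar>c\<bar> powr (2 * p + 1) * b powr (2 * p * (1 - a)) * exp (- t / p))"
proof -
  note lam = assms(1) and p = assms(2)
  from assms(5) obtain dU d2U where UD: "\<forall>z>0. (U has_real_derivative dU z) (at z)
                  \<and> (dU has_real_derivative d2U z) (at z)
                  \<and> z * d2U z + (kummer_beta p - z) * dU z - kummer_alpha p lam * U z = 0"
    unfolding is_tricomi_U_def by blast
  define Yh where "Yh = Upsilon_h U p"
  define dYh where "dYh t = exp (t/p) * exp (- exp (2*t) / 2) * ((1/p - exp (2*t)) * U (exp (2*t)) + 2 * exp (2*t) * dU (exp (2*t)))" for t
  have dY1: "(Yh has_real_derivative dYh s) (at s)" for s
    unfolding Yh_def dYh_def by (rule Yh_derivs(1)[OF p]) (use UD in blast)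
  have dY2: "(dYh has_real_derivative ((1/p^2 - lam * exp (2* s) + exp (4* s)) * Yh s)) (at s)" for s
    unfolding Yh_def dYh_def[abs_def] by (rule Yh_derivs(2)[OF p]) (use UD in blast)
  obtain A1 where A1: "A1 \<ge> 0" "\<And>t. t \<ge> 0 \<Longrightarrow> abs (Yh t) \<le> A1 * wfn lam t"
    using Yh_bound_pos[OF assms(5) p] unfolding Yh_def by blast
  obtain A2 where A2: "A2 \<ge> 0" "\<And>t. t \<ge> 0 \<Longrightarrow> abs (Yg t) \<le> A2 * exp (-2*t) / wfn lam t"
    using Yg_bound_pos[OF assms(6)] by blast
  obtain Ah where Ah: "Ah \<ge> 1" "\<And>t. t \<le> 0 \<Longrightarrow> abs (Yh t) \<le> Ah * exp (-t/p)"
    using Yh_bound_neg[OF p dY1 dY2] by blast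
  define Aa where "Aa = max 1 (max A1 A2)"
  have Aa: "Aa \<ge> 1" unfolding Aa_def by simp
  have Yhp: "abs (Yh s) \<le> Aa * wfn lam s" if "s \<ge> 0" for s
  proof -
    have "abs (Yh s) \<le> A1 * wfn lam s" using A1(2) that by simp
    also have "\<dots> \<le> Aa * wfn lam s" unfolding Aa_def by (intro mult_right_mono) (auto simp: less_imp_le[OF wfn_pos])
    finally show ?thesis .
  qed
  have Ygp: "abs (Yg s) \<le> Aa * exp (-2* s) / wfn lam s" if "s \<ge> 0" for s
  proof -
    have "abs (Yg s) \<le> A2 * exp (-2* s) / wfn lam s" using A2(2) that by simp
    also have "\<dots> \<le> Aa * exp (-2* s) / wfn lam s" unfolding Aa_def
      by (intro divide_right_mono mult_right_mono) (auto simp: less_imp_le[OF wfn_pos])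
    finally show ?thesis .
  qed
  define Ke where "Ke = 2 * Aa^2 * (2*Aa) powr (2*p+1)"
  define qm where "qm = 1/p^2 + abs lam * exp 2 + exp 4"
  define K1 where "K1 = 2 * Ke + (qm * Ke + (2*Aa) powr (2*p+1))"
  define K2 where "K2 = p * K1 + Ke + 1"
  define m0 where "m0 = exp (p * (1 + abs lam) / 2)"
  define D where "D = m0 * (K2 + p * (2 * Ah) powr (2*p+1) / 2)"
  have Ke0: "Ke > 0" unfolding Ke_def using Aa by simp
  have qm0: "qm \<ge> 0" unfolding qm_def by simp
  have K20: "K2 \<ge> 1" unfolding K2_def K1_def using Ke0 qm0 p by simp
  have D0: "D > 0" unfolding D_def m0_def using K20 p by (simp add: add_pos_nonneg)
  define Cf where "Cf = D * max 1 (1/p)"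
  have Cf0: "Cf > 0" unfolding Cf_def using D0 by simp
  show ?thesis
  proof (rule exI[of _ "1::real"], rule conjI[OF zero_less_one], rule exI[of _ Cf], rule conjI[OF Cf0], intro allI impI)
    fix b :: real assume b1: "b \<ge> 1"
    hence b0: "b > 0" by simp
    define L where "L = (1 - a) * p * ln b"
    have L0: "L \<ge> 0" unfolding L_def using assms(4) p b1 by simp
    have eL: "exp (2*L) = b powr (2 * p * (1 - a))" unfolding L_def powr_def using b0 by (simp add: algebra_simps)
    define del where "del = min (Aa / Ke) (Ah / (D * exp (2*L)))"
    have del0: "del > 0" unfolding del_def using Aa Ah Ke0 D0 by simp
    define c0 where "c0 = b powr (1 - a) * del powr (1/(2*p))"
    show "\<exists>c0>0. \<forall>c Psi.
           \<bar>c\<bar> < c0 * b powr (- (1 - a)) \<longrightarrow> is_Psi_c p lam (Upsilon_h U p) Yg c Psi \<longrightarrow>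
           (\<forall>t\<in>{- (1 - a) * p * ln b .. 0}.
              \<bar>Psi t - c * Upsilon_h U p t\<bar>
                \<le> Cf * \<bar>c\<bar> powr (2 * p + 1) * b powr (2 * p * (1 - a)) * exp (- t / p)
            \<and> \<bar>deriv Psi t - c * deriv (Upsilon_h U p) t\<bar>
                \<le> Cf * \<bar>c\<bar> powr (2 * p + 1) * b powr (2 * p * (1 - a)) * exp (- t / p))"
    proof (intro exI[of _ c0] conjI allI impI ballI)
      show "c0 > 0" unfolding c0_def using b0 del0 by simp
      fix c Psi t
      assume cs: "\<bar>c\<bar> < c0 * b powr (- (1 - a))" and PS: "is_Psi_c p lam (Upsilon_h U p) Yg c Psi"
        and t: "t \<in> {- (1 - a) * p * ln b .. 0}"
      have "c0 * b powr (- (1 - a)) = del powr (1/(2*p))"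
      proof -
        have "b powr (1 - a) * b powr (- (1 - a)) = 1" using b0 by (simp flip: powr_add)
        thus ?thesis unfolding c0_def by (simp add: mult.commute mult.left_commute)
      qed
      hence cs': "abs c < del powr (1/(2*p))" using cs by simp
      have cdel: "abs c powr (2*p) < del"
      proof -
        have "abs c powr (2*p) < (del powr (1/(2*p))) powr (2*p)"
          using cs' p by (intro powr_less_mono2) auto
        also have "\<dots> = del" using del0 p by (simp add: powr_powr)
        finally show ?thesis .
      qed
      have sm1: "Ke * abs c powr (2*p) \<le> Aa"
      proof -
        have "Ke * abs c powr (2*p) \<le> Ke * (Aa / Ke)"
          using cdel Ke0 unfolding del_def by (intro mult_left_mono) auto
        thus ?thesis using Ke0 by simp
      qed
      have sm2: "D * exp (2*L) * abs c powr (2*p) < Ah"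
      proof -
        have DE: "D * exp (2*L) > 0" using D0 by simp
        have "D * exp (2*L) * abs c powr (2*p) < D * exp (2*L) * (Ah / (D * exp (2*L)))"
          using cdel DE unfolding del_def by (intro mult_strict_left_mono) auto
        moreover have "D * exp (2*L) * (Ah / (D * exp (2*L))) = Ah" using D0 by simp
        ultimately show ?thesis by simp
      qed
      from PS obtain dPsi C0 where
        dP: "\<forall>t. (Psi has_real_derivative dPsi t) (at t)
              \<and> (dPsi has_real_derivative
                    (Psi t / p^2 - \<bar>Psi t\<bar> powr (2 * p) * Psi t
                     - lam * exp (2 * t) * Psi t + exp (4 * t) * Psi t)) (at t)"
        and int: "\<forall>t\<ge>0. ((\<lambda>s. (Upsilon_h U p s * Yg t - Upsilon_h U p t * Yg s)
                    * (\<bar>Psi s\<bar> powr (2 * p) * Psi s)) has_integral (Psi t - c * Upsilon_h U p t)) {t..}"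
        and dec: "\<forall>t\<ge>0. \<bar>Psi t - c * Upsilon_h U p t\<bar>
                 \<le> C0 * \<bar>c\<bar> powr (2 * p + 1) * exp (- (1 - lam / 2) * t) * exp (- exp (2 * t) / 2)"
        unfolding is_Psi_c_def by blast
      have "- (1 - a) * p * ln b = -L" unfolding L_def by (simp add: algebra_simps)
      hence tL: "-L \<le> t" "t \<le> 0" using t by auto
      have CORE: "abs (Psi t - c * Yh t) \<le> (D * max 1 (1/p)) * abs c powr (2*p+1) * exp (2*L) * exp (-t/p)
         \<and> abs (dPsi t - c * dYh t) \<le> (D * max 1 (1/p)) * abs c powr (2*p+1) * exp (2*L) * exp (-t/p)"
        unfolding D_def m0_def K2_def K1_def qm_def Ke_def
        by (rule core[OF p lam L0 Aa Ah(1) dY1 dY2 Yhp Ygp Ah(2), of Psi dPsi c C0])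
           (use dP int dec sm1 sm2 tL in \<open>simp_all add: Yh_def D_def m0_def K2_def K1_def qm_def Ke_def\<close>)
      have dd1: "deriv Psi t = dPsi t" using dP by (simp add: DERIV_imp_deriv)
      have dd2: "deriv (Upsilon_h U p) t = dYh t" using dY1[of t] unfolding Yh_def by (simp add: DERIV_imp_deriv)
      show "\<bar>Psi t - c * Upsilon_h U p t\<bar>
                \<le> Cf * \<bar>c\<bar> powr (2 * p + 1) * b powr (2 * p * (1 - a)) * exp (- t / p)"
        using CORE unfolding Cf_def eL Yh_def by (simp add: mult.assoc)
      show "\<bar>deriv Psi t - c * deriv (Upsilon_h U p) t\<bar>
                \<le> Cf * \<bar>c\<bar> powr (2 * p + 1) * b powr (2 * p * (1 - a)) * exp (- t / p)"
        using CORE unfolding Cf_def eL dd1 dd2 by (simp add: mult.assoc)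
    qed
  qed
qed

end
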